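(* Let $(I_n:\Delta_n^\circ\times\Delta_n^\circ\to\mathbb{R})_{n\ge1}$ be a family of functions (written $I(\mathbf{p}\|\mathbf{q})$). The following are equivalent: (i) the family satisfies (C1) for each $n$ and each fixed $\mathbf{q}$, $\mathbf{p}\mapsto I(\mathbf{p}\|\mathbf{q})$ is Lebesgue measurable, and for each fixed $\mathbf{p}$, $\mathbf{q}\mapsto I(\mathbf{p}\|\mathbf{q})$ is Lebesgue measurable; (C2) $I(\mathbf{p}\sigma\|\mathbf{q}\sigma)=I(\mathbf{p}\|\mathbf{q})$ for every permutation $\sigma$ of $\{1,\dots,n\}$; (C3) $I(\mathbf{p}\|\mathbf{p})=0$ for all $\mathbf{p}\in\Delta_n^\circ$; (C4) for all $n\ge1$, $(\mathbf{p},\mathbf{q})\in\Delta_n^\circ\times\Delta_n^\circ$, integers $k_1,\dots,k_n\ge1$ and $(\boldsymbol{\mu}^i,\boldsymbol{\nu}^i)\in\Delta_{k_i}^\circ\times\Delta_{k_i}^\circ$, $$I(\mathbf{p}\circ\boldsymbol{\mu}\,\|\,\mathbf{q}\circ\boldsymbol{\nu})=I(\mathbf{p}\|\mathbf{q})+\sum_{i=1}^np_iI(\boldsymbol{\mu}^i\|\boldsymbol{\nu}^i);$$ (ii) there is $c\in\mathbb{R}$ such that $I(\mathbf{p}\|\mathbf{q})=c\,H(\mathbf{p}\|\mathbf{q})$ for all $n\ge1$ and all $(\mathbf{p},\mathbf{q})\in\Delta_n^\circ\times\Delta_n^\circ$.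
   Context: $\Delta_n^\circ=\{\mathbf{x}\in(0,1]^n:\sum_ix_i=1\}$ (so $\Delta_1^\circ=\{1\}$). For a permutation $\sigma$, $\mathbf{x}\sigma=(x_{\sigma(1)},\dots,x_{\sigma(n)})$. Composite distribution: for $\mathbf{p}\in\Delta_n^\circ$ and $\boldsymbol{\mu}=(\boldsymbol{\mu}^1,\dots,\boldsymbol{\mu}^n)$ with $\boldsymbol{\mu}^i\in\Delta_{k_i}^\circ$, $\mathbf{p}\circ\boldsymbol{\mu}=(p_1\boldsymbol{\mu}^1,\dots,p_n\boldsymbol{\mu}^n)\in\Delta_{k_1+\cdots+k_n}^\circ$ (concatenation of blocks). Relative entropy: $H(\mathbf{p}\|\mathbf{q})=\sum_ip_i\log(p_i/q_i)$. *)

theory Defs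
  imports "HOL-Analysis.Analysis" "HOL-Combinatorics.Permutations"
begin

definition osimplex :: "nat \<Rightarrow> real list set" where
  "osimplex n = {p. length p = n \<and> (\<forall>x\<in>set p. 0 < x \<and> x \<le> 1) \<and> sum_list p = 1}"

definition permute_vec :: "real list \<Rightarrow> (nat \<Rightarrow> nat) \<Rightarrow> real list" where
  "permute_vec p \<sigma> = map (\<lambda>i. p ! \<sigma> i) [0..<length p]"

definition composite :: "real list \<Rightarrow> real list list \<Rightarrow> real list" where
  "composite p \<mu> = concat (map (\<lambda>(pi, m). map (\<lambda>x. pi * x) m) (zip p \<mu>))"

definition relent :: "real list \<Rightarrow> real list \<Rightarrow> real" where
  "relent p q = (\<Sum>i<length p. p ! i * ln (p ! i / q ! i))"

text \<open>Standard chart of the open simplex of dimension m+1 by its first m coordinates.\<close>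
definition chart_dom :: "nat \<Rightarrow> (nat \<Rightarrow> real) set" where
  "chart_dom m = {x. (\<forall>i<m. 0 < x i) \<and> (\<Sum>i<m. x i) < 1}"

definition chart :: "nat \<Rightarrow> (nat \<Rightarrow> real) \<Rightarrow> real list" where
  "chart m x = map x [0..<m] @ [1 - (\<Sum>i<m. x i)]"

definition lebesgue_m :: "nat \<Rightarrow> (nat \<Rightarrow> real) measure" where
  "lebesgue_m m = completion (Pi\<^sub>M {..<m} (\<lambda>_. lborel))"

text \<open>A function on the open simplex of dimension m+1 is Lebesgue measurable
  if it is so in the chart coordinates.\<close>
definition simplex_measurable :: "nat \<Rightarrow> (real list \<Rightarrow> real) \<Rightarrow> bool" where
  "simplex_measurable m f \<longleftrightarrow>
     (\<lambda>x. if x \<in> chart_dom m then f (chart m x) else 0) \<in> borel_measurable (lebesgue_m m)"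

definition C1 :: "(real list \<Rightarrow> real list \<Rightarrow> real) \<Rightarrow> bool" where
  "C1 I \<longleftrightarrow> (\<forall>m. (\<forall>q \<in> osimplex (Suc m). simplex_measurable m (\<lambda>p. I p q)) \<and>
                  (\<forall>p \<in> osimplex (Suc m). simplex_measurable m (\<lambda>q. I p q)))"

definition C2 :: "(real list \<Rightarrow> real list \<Rightarrow> real) \<Rightarrow> bool" where
  "C2 I \<longleftrightarrow> (\<forall>n p q \<sigma>. p \<in> osimplex n \<longrightarrow> q \<in> osimplex n \<longrightarrow> \<sigma> permutes {..<n} \<longrightarrow>
     I (permute_vec p \<sigma>) (permute_vec q \<sigma>) = I p q)"

definition C3 :: "(real list \<Rightarrow> real list \<Rightarrow> real) \<Rightarrow> bool" where
  "C3 I \<longleftrightarrow> (\<forall>n. \<forall>p \<in> osimplex n. I p p = 0)"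

definition C4 :: "(real list \<Rightarrow> real list \<Rightarrow> real) \<Rightarrow> bool" where
  "C4 I \<longleftrightarrow> (\<forall>n p q \<mu> \<nu>. p \<in> osimplex n \<longrightarrow> q \<in> osimplex n \<longrightarrow>
     length \<mu> = n \<longrightarrow> length \<nu> = n \<longrightarrow>
     (\<forall>i<n. \<exists>k\<ge>1. \<mu> ! i \<in> osimplex k \<and> \<nu> ! i \<in> osimplex k) \<longrightarrow>
     I (composite p \<mu>) (composite q \<nu>) = I p q + (\<Sum>i<n. p ! i * I (\<mu> ! i) (\<nu> ! i)))"

end

theory Submission
  imports Defs
begin

lemma os1: "[1] \<in> osimplex 1" by (simp add: osimplex_def)

lemma os2: "[a,b] \<in> osimplex 2 \<longleftrightarrow> a>0 \<and> b>0 \<and> a+b=(1::real)"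
  by (auto simp: osimplex_def)

lemma os3: "[a,b,c] \<in> osimplex 3 \<longleftrightarrow> a>0 \<and> b>0 \<and> c>0 \<and> a+b+c=(1::real)"
  by (auto simp: osimplex_def)

lemma os4: "[a,b,c,d] \<in> osimplex 4 \<longleftrightarrow> a>0 \<and> b>0 \<and> c>0 \<and> d>0 \<and> a+b+c+d=(1::real)"
  by (auto simp: osimplex_def)

lemma osimplex_pos: "p \<in> osimplex k \<Longrightarrow> k \<ge> 1"
proof (rule ccontr)
  assume "p \<in> osimplex k" "\<not> k \<ge> 1"
  then have "p = []" by (cases p) (auto simp: osimplex_def)
  with \<open>p \<in> osimplex k\<close> show False by (simp add: osimplex_def)
qed

lemma C4_2:
  assumes "C4 I" "[p1,p2] \<in> osimplex 2" "[q1,q2] \<in> osimplex 2"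
    "m1 \<in> osimplex k1" "n1 \<in> osimplex k1" "m2 \<in> osimplex k2" "n2 \<in> osimplex k2"
  shows "I (map ((*) p1) m1 @ map ((*) p2) m2) (map ((*) q1) n1 @ map ((*) q2) n2)
       = I [p1,p2] [q1,q2] + p1 * I m1 n1 + p2 * I m2 n2"
proof -
  have k: "k1 \<ge> 1" "k2 \<ge> 1" using assms(4,6) osimplex_pos by blast+
  have A: "\<forall>i<2. \<exists>k\<ge>1. [m1,m2] ! i \<in> osimplex k \<and> [n1,n2] ! i \<in> osimplex k"
  proof (intro allI impI)
    fix i :: nat assume "i < 2"
    then have "i = 0 \<or> i = 1" by linarith
    then show "\<exists>k\<ge>1. [m1,m2] ! i \<in> osimplex k \<and> [n1,n2] ! i \<in> osimplex k"
      using assms k by auto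
  qed
  have H: "I (composite [p1,p2] [m1,m2]) (composite [q1,q2] [n1,n2])
     = I [p1,p2] [q1,q2] + (\<Sum>i<2. [p1,p2] ! i * I ([m1,m2] ! i) ([n1,n2] ! i))"
    using assms(1)[unfolded C4_def, THEN spec[where x=2], THEN spec[where x="[p1,p2]"],
      THEN spec[where x="[q1,q2]"], THEN spec[where x="[m1,m2]"], THEN spec[where x="[n1,n2]"]]
      assms(2,3) A by simp
  have "(\<Sum>i<2. [p1,p2] ! i * I ([m1,m2] ! i) ([n1,n2] ! i)) = p1 * I m1 n1 + p2 * I m2 n2"
    by (simp add: numeral_2_eq_2)
  with H show ?thesis by (simp add: composite_def)
qed

lemma C4_3:
  assumes "C4 I" "[p1,p2,p3] \<in> osimplex 3" "[q1,q2,q3] \<in> osimplex 3"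
    "m1 \<in> osimplex k1" "n1 \<in> osimplex k1" "m2 \<in> osimplex k2" "n2 \<in> osimplex k2"
    "m3 \<in> osimplex k3" "n3 \<in> osimplex k3"
  shows "I (map ((*) p1) m1 @ map ((*) p2) m2 @ map ((*) p3) m3) (map ((*) q1) n1 @ map ((*) q2) n2 @ map ((*) q3) n3)
       = I [p1,p2,p3] [q1,q2,q3] + p1 * I m1 n1 + p2 * I m2 n2 + p3 * I m3 n3"
proof -
  have k: "k1 \<ge> 1" "k2 \<ge> 1" "k3 \<ge> 1" using assms(4,6,8) osimplex_pos by blast+
  have A: "\<forall>i<3. \<exists>k\<ge>1. [m1,m2,m3] ! i \<in> osimplex k \<and> [n1,n2,n3] ! i \<in> osimplex k"
  proof (intro allI impI)
    fix i :: nat assume "i < 3"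
    then have "i = 0 \<or> i = 1 \<or> i = 2" by linarith
    then show "\<exists>k\<ge>1. [m1,m2,m3] ! i \<in> osimplex k \<and> [n1,n2,n3] ! i \<in> osimplex k"
      using assms k by auto
  qed
  have H: "I (composite [p1,p2,p3] [m1,m2,m3]) (composite [q1,q2,q3] [n1,n2,n3])
     = I [p1,p2,p3] [q1,q2,q3] + (\<Sum>i<3. [p1,p2,p3] ! i * I ([m1,m2,m3] ! i) ([n1,n2,n3] ! i))"
    using assms(1)[unfolded C4_def, THEN spec[where x=3], THEN spec[where x="[p1,p2,p3]"],
      THEN spec[where x="[q1,q2,q3]"], THEN spec[where x="[m1,m2,m3]"], THEN spec[where x="[n1,n2,n3]"]]
      assms(2,3) A by simp
  have "(\<Sum>i<3. [p1,p2,p3] ! i * I ([m1,m2,m3] ! i) ([n1,n2,n3] ! i)) = p1 * I m1 n1 + p2 * I m2 n2 + p3 * I m3 n3"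
    by (simp add: numeral_3_eq_3)
  with H show ?thesis by (simp add: composite_def)
qed

lemma C2_app:
  assumes "C2 I" "p \<in> osimplex n" "q \<in> osimplex n" "\<sigma> permutes {..<n}"
  shows "I (permute_vec p \<sigma>) (permute_vec q \<sigma>) = I p q"
  using assms unfolding C2_def by blast

lemma perm2: "permute_vec [a,b] (Transposition.transpose 0 1) = [b,a]"
  by (simp add: permute_vec_def upt_rec transpose_def numeral_2_eq_2 numeral_3_eq_3)
lemma perm3a: "permute_vec [a,b,c] (Transposition.transpose 1 2) = [a,c,b]"
  by (simp add: permute_vec_def upt_rec transpose_def numeral_2_eq_2 numeral_3_eq_3)
lemma perm3b: "permute_vec [a,b,c] (Transposition.transpose 0 2) = [c,b,a]"
  by (simp add: permute_vec_def upt_rec transpose_def numeral_2_eq_2 numeral_3_eq_3)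
lemma perm4a: "permute_vec [a,b,c,d] (Transposition.transpose 1 3) = [a,d,c,b]"
  by (simp add: permute_vec_def upt_rec transpose_def numeral_2_eq_2 numeral_3_eq_3)
lemma perm4b: "permute_vec [a,b,c,d] (Transposition.transpose 1 2) = [a,c,b,d]"
  by (simp add: permute_vec_def upt_rec transpose_def numeral_2_eq_2 numeral_3_eq_3)

lemma C3_app: "C3 I \<Longrightarrow> p \<in> osimplex n \<Longrightarrow> I p p = 0"
  unfolding C3_def by blast

definition bin :: "(real list \<Rightarrow> real list \<Rightarrow> real) \<Rightarrow> real \<Rightarrow> real \<Rightarrow> real" where
  "bin I x y = I [x, 1-x] [y, 1-y]"

lemma bin_sym:
  assumes "C2 I" "0<x" "x<1" "0<y" "y<1"
  shows "bin I x y = bin I (1-x) (1-y)"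
proof -
  have "I (permute_vec [x,1-x] (Transposition.transpose 0 1)) (permute_vec [y,1-y] (Transposition.transpose 0 1))
        = I [x,1-x] [y,1-y]"
    by (rule C2_app[OF assms(1), of _ 2]) (use assms in \<open>auto simp: os2 intro: permutes_swap_id\<close>)
  then have "I [1-x,x] [1-y,y] = I [x,1-x] [y,1-y]" by (simp only: perm2)
  then show ?thesis by (simp add: bin_def)
qed

lemma bin_diag: "C3 I \<Longrightarrow> 0<x \<Longrightarrow> x<1 \<Longrightarrow> bin I x x = 0"
  unfolding bin_def by (erule C3_app[of _ _ 2]) (simp add: os2)

lemma bin_list: "b = 1 - a \<Longrightarrow> d = 1 - c \<Longrightarrow> I [a,b] [c,d] = bin I a c"
  by (simp add: bin_def)

definition KK :: "(real list \<Rightarrow> real list \<Rightarrow> real) \<Rightarrow> real \<Rightarrow> real \<Rightarrow> real" where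
  "KK I \<alpha> \<beta> = (\<alpha>+\<beta>-1) * bin I (\<alpha>/(\<alpha>+\<beta>-1)) ((\<alpha>-1)/(\<alpha>+\<beta>-1))"

lemma L4:
  assumes C3: "C3 I" and C4: "C4 I" and gt: "\<alpha> > 1" "\<beta> > 1" "\<alpha>' > 1" "\<beta>' > 1"
    and M: "M = \<alpha>+\<beta>+\<alpha>'+\<beta>'-2"
  shows "I [\<alpha>/M, (\<beta>-1)/M, \<alpha>'/M, (\<beta>'-1)/M] [(\<alpha>-1)/M, \<beta>/M, (\<alpha>'-1)/M, \<beta>'/M]
         = (KK I \<alpha> \<beta> + KK I \<alpha>' \<beta>')/M"
proof -
  define m1 where "m1 = \<alpha>+\<beta>-1"
  define m2 where "m2 = \<alpha>'+\<beta>'-1"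
  have m1: "m1 > 1" and m2: "m2 > 1" and Mm: "M = m1 + m2" using gt M by (auto simp: m1_def m2_def)
  have Mpos: "M > 0" using m1 m2 Mm by simp
  have o: "[m1/M, m2/M] \<in> osimplex 2"
    using m1 m2 Mm by (simp add: os2 add_divide_distrib[symmetric])
  have s1: "\<alpha>/m1 + (\<beta>-1)/m1 = 1" "(\<alpha>-1)/m1 + \<beta>/m1 = 1"
    using m1 by (simp_all add: m1_def add_divide_distrib[symmetric])
  have s2: "\<alpha>'/m2 + (\<beta>'-1)/m2 = 1" "(\<alpha>'-1)/m2 + \<beta>'/m2 = 1"
    using m2 by (simp_all add: m2_def add_divide_distrib[symmetric])
  have i1: "[\<alpha>/m1, (\<beta>-1)/m1] \<in> osimplex 2" "[(\<alpha>-1)/m1, \<beta>/m1] \<in> osimplex 2"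
    using gt m1 s1 by (auto simp: os2)
  have i2: "[\<alpha>'/m2, (\<beta>'-1)/m2] \<in> osimplex 2" "[(\<alpha>'-1)/m2, \<beta>'/m2] \<in> osimplex 2"
    using gt m2 s2 by (auto simp: os2)
  note H = C4_2[OF C4 o o i1 i2]
  have e0: "I [m1/M, m2/M] [m1/M, m2/M] = 0" using C3_app[OF C3 o] .
  have e1: "I [\<alpha>/m1, (\<beta>-1)/m1] [(\<alpha>-1)/m1, \<beta>/m1] = bin I (\<alpha>/m1) ((\<alpha>-1)/m1)"
    by (rule bin_list) (use s1 in \<open>auto simp: algebra_simps\<close>)
  have e2: "I [\<alpha>'/m2, (\<beta>'-1)/m2] [(\<alpha>'-1)/m2, \<beta>'/m2] = bin I (\<alpha>'/m2) ((\<alpha>'-1)/m2)"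
    by (rule bin_list) (use s2 in \<open>auto simp: algebra_simps\<close>)
  have l1: "map ((*) (m1/M)) [\<alpha>/m1, (\<beta>-1)/m1] @ map ((*) (m2/M)) [\<alpha>'/m2, (\<beta>'-1)/m2]
      = [\<alpha>/M, (\<beta>-1)/M, \<alpha>'/M, (\<beta>'-1)/M]" using m1 m2 by simp
  have l2: "map ((*) (m1/M)) [(\<alpha>-1)/m1, \<beta>/m1] @ map ((*) (m2/M)) [(\<alpha>'-1)/m2, \<beta>'/m2]
      = [(\<alpha>-1)/M, \<beta>/M, (\<alpha>'-1)/M, \<beta>'/M]" using m1 m2 by simp
  have "I [\<alpha>/M, (\<beta>-1)/M, \<alpha>'/M, (\<beta>'-1)/M] [(\<alpha>-1)/M, \<beta>/M, (\<alpha>'-1)/M, \<beta>'/M]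
      = m1/M * bin I (\<alpha>/m1) ((\<alpha>-1)/m1) + m2/M * bin I (\<alpha>'/m2) ((\<alpha>'-1)/m2)"
    using H unfolding l1 l2 e0 e1 e2 by simp
  also have "\<dots> = (KK I \<alpha> \<beta> + KK I \<alpha>' \<beta>')/M"
    by (simp add: KK_def m1_def m2_def add_divide_distrib)
  finally show ?thesis .
qed

lemma KK_add:
  assumes C2: "C2 I" and C3: "C3 I" and C4: "C4 I" and gt: "\<alpha> > 1" "\<beta> > 1" "\<alpha>' > 1" "\<beta>' > 1"
  shows "KK I \<alpha> \<beta> + KK I \<alpha>' \<beta>' = KK I \<alpha> \<beta>' + KK I \<alpha>' \<beta>"
proof -
  define M where "M = \<alpha>+\<beta>+\<alpha>'+\<beta>'-2"
  have Mpos: "M > 0" using gt by (simp add: M_def)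
  note A = L4[OF C3 C4 gt M_def]
  have MB: "M = \<alpha>+\<beta>'+\<alpha>'+\<beta>-2" by (simp add: M_def)
  note B = L4[OF C3 C4 gt(1,4,3,2) MB]
  have ss: "\<alpha>/M + (\<beta>-1)/M + \<alpha>'/M + (\<beta>'-1)/M = 1" "(\<alpha>-1)/M + \<beta>/M + (\<alpha>'-1)/M + \<beta>'/M = 1"
    unfolding add_divide_distrib[symmetric] using Mpos by (simp_all add: M_def)
  have o1: "[\<alpha>/M, (\<beta>-1)/M, \<alpha>'/M, (\<beta>'-1)/M] \<in> osimplex 4"
    using gt Mpos ss by (simp add: os4)
  have o2: "[(\<alpha>-1)/M, \<beta>/M, (\<alpha>'-1)/M, \<beta>'/M] \<in> osimplex 4"
    using gt Mpos ss by (simp add: os4)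
  note P = C2_app[OF C2 o1 o2 permutes_swap_id[of 1 "{..<4}" 3]]
  have "(KK I \<alpha> \<beta> + KK I \<alpha>' \<beta>')/M = (KK I \<alpha> \<beta>' + KK I \<alpha>' \<beta>)/M"
    using A B P unfolding perm4a by simp
  then show ?thesis using Mpos by (simp add: divide_cancel_right)
qed

definition uu where "uu I a = KK I a 2 - KK I 2 2 / 2"
definition vv where "vv I b = KK I 2 b - KK I 2 2 / 2"

lemma KK_uv:
  assumes "C2 I" "C3 I" "C4 I" "\<alpha> > 1" "\<beta> > 1"
  shows "KK I \<alpha> \<beta> = uu I \<alpha> + vv I \<beta>"
  using KK_add[OF assms(1-5), of 2 2] by (simp add: uu_def vv_def)

definition GG where
  "GG I \<pi> \<rho> = (if \<rho> < \<pi> then (\<pi>-\<rho>) * uu I (\<pi>/(\<pi>-\<rho>))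
                else if \<pi> < \<rho> then (\<rho>-\<pi>) * vv I (\<rho>/(\<rho>-\<pi>)) else 0)"

lemma GG_homog:
  assumes "c > 0"
  shows "GG I (c*\<pi>) (c*\<rho>) = c * GG I \<pi> \<rho>"
proof -
  have a: "c*\<pi> - c*\<rho> = c*(\<pi>-\<rho>)" "c*\<rho> - c*\<pi> = c*(\<rho>-\<pi>)" by (simp_all add: algebra_simps)
  have b: "c*\<pi>/(c*(\<pi>-\<rho>)) = \<pi>/(\<pi>-\<rho>)" "c*\<rho>/(c*(\<rho>-\<pi>)) = \<rho>/(\<rho>-\<pi>)" using assms by simp_all
  show ?thesis using assms unfolding GG_def a b by (auto simp: mult_less_cancel_left_pos)
qed

lemma GG_diag: "GG I x x = 0" by (simp add: GG_def)

lemma rep2_gt: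
  assumes C: "C2 I" "C3 I" "C4 I" and xy: "0<y" "y<x" "x<1"
  shows "bin I x y = GG I x y + GG I (1-x) (1-y)"
proof -
  define d where "d = x - y"
  have d: "d > 0" using xy by (simp add: d_def)
  define \<alpha> where "\<alpha> = x/d"
  define \<beta> where "\<beta> = (1-y)/d"
  have dd: "x - d = y" "1 - y - d = 1 - x" by (simp_all add: d_def)
  have ab: "\<alpha> > 1" "\<beta> > 1" using xy d dd by (simp_all add: \<alpha>_def \<beta>_def field_simps)
  have "\<alpha>+\<beta>-1 = (x + (1-y) - d)/d" using d by (simp add: \<alpha>_def \<beta>_def field_simps)
  then have s: "\<alpha>+\<beta>-1 = 1/d" using dd by simp
  have ad: "\<alpha> * d = x" using d by (simp add: \<alpha>_def)
  have s1: "\<alpha>/(\<alpha>+\<beta>-1) = x" "(\<alpha>-1)/(\<alpha>+\<beta>-1) = y" unfolding s using d ad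
    by (simp_all add: algebra_simps d_def)
  have "GG I x y + GG I (1-x) (1-y) = d * uu I \<alpha> + d * vv I \<beta>"
    using xy by (simp add: GG_def d_def \<alpha>_def \<beta>_def)
  also have "\<dots> = d * KK I \<alpha> \<beta>" using KK_uv[OF C ab] by (simp add: algebra_simps)
  also have "\<dots> = bin I x y"
  proof -
    have "KK I \<alpha> \<beta> = (\<alpha>+\<beta>-1) * bin I x y" unfolding KK_def s1 by (rule refl)
    then show ?thesis using s d by simp
  qed
  finally show ?thesis by simp
qed

lemma rep2:
  assumes C: "C2 I" "C3 I" "C4 I" and xy: "0<x" "x<1" "0<y" "y<1"
  shows "bin I x y = GG I x y + GG I (1-x) (1-y)"
proof -
  consider "y < x" | "x < y" | "x = y" by linarith
  then show ?thesis
  proof cases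
    case 1 then show ?thesis using rep2_gt[OF C] xy by simp
  next
    case 2
    have "bin I (1-x) (1-y) = GG I (1-x) (1-y) + GG I (1-(1-x)) (1-(1-y))"
      by (rule rep2_gt[OF C]) (use 2 xy in auto)
    then show ?thesis using bin_sym[OF C(1) xy] by simp
  next
    case 3 then show ?thesis using bin_diag[OF C(2) xy(1,2)] by (simp add: GG_diag)
  qed
qed

lemma scaled_bin:
  assumes C: "C2 I" "C3 I" "C4 I" and pos: "a>0" "b>0" "a'>0" "b'>0"
    and s: "a+b = s" "a'+b' = s"
  shows "s * bin I (a/s) (a'/s) = GG I a a' + GG I b b'"
proof -
  have sp: "s > 0" using pos s by simp
  have x: "0 < a/s" "a/s < 1" "0 < a'/s" "a'/s < 1" using pos s sp by (auto simp: field_simps)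
  have "1 - a/s = b/s" "1 - a'/s = b'/s" using s sp by (auto simp: field_simps)
  then have "bin I (a/s) (a'/s) = GG I (a/s) (a'/s) + GG I (b/s) (b'/s)"
    using rep2[OF C x] by simp
  moreover have "s * GG I (a/s) (a'/s) = GG I a a'" "s * GG I (b/s) (b'/s) = GG I b b'"
    using GG_homog[OF sp, of I "a/s" "a'/s"] GG_homog[OF sp, of I "b/s" "b'/s"] sp by simp_all
  ultimately show ?thesis by (simp add: algebra_simps)
qed

lemma mix4:
  assumes C: "C2 I" "C3 I" "C4 I" and pos: "a>0" "b>0" "c>0" "d>0" "a'>0" "b'>0" "c'>0" "d'>0"
    and s: "a+b = a'+b'" "a+b+c+d = 1" "a'+b'+c'+d' = 1"
  shows "I [a,b,c,d] [a',b',c',d'] = GG I a a' + GG I b b' + GG I c c' + GG I d d'"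
proof -
  define s1 where "s1 = a+b"
  define s2 where "s2 = c+d"
  have s2': "c'+d' = s2" using s by (simp add: s2_def)
  have sp: "s1 > 0" "s2 > 0" using pos by (simp_all add: s1_def s2_def)
  have o: "[s1, s2] \<in> osimplex 2" using sp s by (simp add: os2 s1_def s2_def)
  have sm: "a/s1 + b/s1 = 1" "a'/s1 + b'/s1 = 1" "c/s2 + d/s2 = 1" "c'/s2+d'/s2 = 1"
    using sp s s2' unfolding add_divide_distrib[symmetric] by (simp_all add: s1_def s2_def)
  have i: "[a/s1, b/s1] \<in> osimplex 2" "[a'/s1, b'/s1] \<in> osimplex 2"
          "[c/s2, d/s2] \<in> osimplex 2" "[c'/s2, d'/s2] \<in> osimplex 2"
    using pos sp sm by (simp_all add: os2)
  note H = C4_2[OF C(3) o o i]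
  have l: "map ((*) s1) [a/s1, b/s1] @ map ((*) s2) [c/s2, d/s2] = [a,b,c,d]"
          "map ((*) s1) [a'/s1, b'/s1] @ map ((*) s2) [c'/s2, d'/s2] = [a',b',c',d']"
    using sp by simp_all
  have e: "I [a/s1, b/s1] [a'/s1, b'/s1] = bin I (a/s1) (a'/s1)"
          "I [c/s2, d/s2] [c'/s2, d'/s2] = bin I (c/s2) (c'/s2)"
    using sm by (auto intro!: bin_list simp: algebra_simps)
  have "I [a,b,c,d] [a',b',c',d'] = s1 * bin I (a/s1) (a'/s1) + s2 * bin I (c/s2) (c'/s2)"
    using H unfolding l e C3_app[OF C(2) o] by simp
  also have "\<dots> = GG I a a' + GG I b b' + (GG I c c' + GG I d d')"
    using scaled_bin[OF C pos(1,2,5,6)] scaled_bin[OF C pos(3,4,7,8)] s s2'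
    by (simp add: s1_def s2_def)
  finally show ?thesis by simp
qed

lemma mix3:
  assumes C: "C2 I" "C3 I" "C4 I" and pos: "a>0" "b>0" "c>0" "a'>0" "b'>0"
    and s: "a+b+c = 1" "a'+b'+c = 1"
  shows "I [a,b,c] [a',b',c] = GG I a a' + GG I b b' + GG I c c"
proof -
  define s1 where "s1 = a+b"
  have s1': "a'+b' = s1" using s by (simp add: s1_def)
  have sp: "s1 > 0" using pos by (simp_all add: s1_def)
  have o: "[s1, c] \<in> osimplex 2" using sp s pos by (simp add: os2 s1_def)
  have sm: "a/s1 + b/s1 = 1" "a'/s1 + b'/s1 = 1"
    using sp s s1' unfolding add_divide_distrib[symmetric] by (simp_all add: s1_def)
  have i: "[a/s1, b/s1] \<in> osimplex 2" "[a'/s1, b'/s1] \<in> osimplex 2"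
    using pos sp sm by (simp_all add: os2)
  note H = C4_2[OF C(3) o o i os1 os1]
  have l: "map ((*) s1) [a/s1, b/s1] @ map ((*) c) [1] = [a,b,c]"
          "map ((*) s1) [a'/s1, b'/s1] @ map ((*) c) [1] = [a',b',c]"
    using sp by simp_all
  have e: "I [a/s1, b/s1] [a'/s1, b'/s1] = bin I (a/s1) (a'/s1)"
    using sm by (auto intro!: bin_list simp: algebra_simps)
  have "I [a,b,c] [a',b',c] = s1 * bin I (a/s1) (a'/s1)"
    using H unfolding l e C3_app[OF C(2) o] C3_app[OF C(2) os1] by simp
  also have "\<dots> = GG I a a' + GG I b b'"
    using scaled_bin[OF C pos(1,2,4,5)] s1' by (simp add: s1_def)
  finally show ?thesis by (simp add: GG_diag)
qed

lemma GG_split: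
  assumes "0 < l" "l < 1"
  shows "GG I (l*a) (l*b) + GG I ((1-l)*a) ((1-l)*b) = GG I a b"
  using GG_homog[of l I a b] GG_homog[of "1-l" I a b] assms by (simp add: algebra_simps)

lemma rep3_R:
  assumes C: "C2 I" "C3 I" "C4 I" and o: "[P1,P2,P3] \<in> osimplex 3" "[Q1,Q2,Q3] \<in> osimplex 3"
    and sg: "(P1-Q1)*(P2-Q2) > 0"
  shows "I [P1,P2,P3] [Q1,Q2,Q3] = GG I P1 Q1 + GG I P2 Q2 + GG I P3 Q3"
proof -
  have pos: "P1>0" "P2>0" "P3>0" "Q1>0" "Q2>0" "Q3>0" and sums: "P1+P2+P3=1" "Q1+Q2+Q3=1"
    using o by (auto simp: os3)
  define l where "l = (P1-Q1)/((P1-Q1)+(P2-Q2))"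
  have "(P1-Q1 > 0 \<and> P2-Q2 > 0) \<or> (P1-Q1 < 0 \<and> P2-Q2 < 0)" using sg by (simp add: zero_less_mult_iff)
  then have l: "0 < l" "l < 1" unfolding l_def
    by (auto simp: divide_less_eq zero_less_divide_iff)
  have bal: "P1 + P3*l = Q1 + Q3*l"
  proof -
    have ne: "(P1-Q1)+(P2-Q2) \<noteq> 0" using sg by (auto simp: zero_less_mult_iff)
    have "l * ((P1-Q1)+(P2-Q2)) = P1 - Q1" using ne by (simp add: l_def)
    moreover have "Q3 - P3 = (P1-Q1)+(P2-Q2)" using sums by simp
    ultimately have h: "l*P1 - l*Q1 + l*P2 - l*Q2 = P1 - Q1" by (simp add: algebra_simps)
    have "l*(P1+P2+P3) = l" "l*(Q1+Q2+Q3) = l" using sums by simp_all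
    then have "l*P1 + l*P2 + l*P3 = l" "l*Q1 + l*Q2 + l*Q3 = l" by (simp_all add: distrib_left)
    with h have "P1 + l*P3 = Q1 + l*Q3" by linarith
    then show ?thesis by (simp add: mult.commute)
  qed
  have il: "[l, 1-l] \<in> osimplex 2" using l by (simp add: os2)
  note H = C4_3[OF C(3) o os1 os1 os1 os1 il il]
  have "I [P1, P2, P3*l, P3*(1-l)] [Q1, Q2, Q3*l, Q3*(1-l)] = I [P1,P2,P3] [Q1,Q2,Q3]"
    using H unfolding C3_app[OF C(2) os1] C3_app[OF C(2) il] by simp
  moreover
  have o4: "[P1, P2, P3*l, P3*(1-l)] \<in> osimplex 4" "[Q1, Q2, Q3*l, Q3*(1-l)] \<in> osimplex 4"
    using pos l sums by (auto simp: os4 algebra_simps)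
  note P = C2_app[OF C(1) o4 permutes_swap_id[of 1 "{..<4}" 2]]
  moreover
  have "I [P1, P3*l, P2, P3*(1-l)] [Q1, Q3*l, Q2, Q3*(1-l)]
        = GG I P1 Q1 + GG I (P3*l) (Q3*l) + GG I P2 Q2 + GG I (P3*(1-l)) (Q3*(1-l))"
  proof -
    have pp: "P3*l > 0" "P3*(1-l)>0" "Q3*l>0" "Q3*(1-l)>0" using pos l by simp_all
    have ss: "P1 + P3*l + P2 + P3*(1-l) = 1" "Q1 + Q3*l + Q2 + Q3*(1-l) = 1"
      using sums by (simp_all add: algebra_simps)
    show ?thesis by (rule mix4[OF C pos(1) pp(1) pos(2) pp(2) pos(4) pp(3) pos(5) pp(4) bal ss])
  qed
  moreover have "GG I (P3*l) (Q3*l) + GG I (P3*(1-l)) (Q3*(1-l)) = GG I P3 Q3"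
    using GG_split[OF l, of I P3 Q3] by (simp add: mult.commute)
  ultimately show ?thesis unfolding perm4b by simp
qed

lemma rep3:
  assumes C: "C2 I" "C3 I" "C4 I" and o: "[P1,P2,P3] \<in> osimplex 3" "[Q1,Q2,Q3] \<in> osimplex 3"
  shows "I [P1,P2,P3] [Q1,Q2,Q3] = GG I P1 Q1 + GG I P2 Q2 + GG I P3 Q3"
proof -
  have pos: "P1>0" "P2>0" "P3>0" "Q1>0" "Q2>0" "Q3>0" and sums: "P1+P2+P3=1" "Q1+Q2+Q3=1"
    using o by (auto simp: os3)
  have oa: "[P1,P3,P2] \<in> osimplex 3" "[Q1,Q3,Q2] \<in> osimplex 3"
    using pos sums by (auto simp: os3 algebra_simps)
  have ob: "[P3,P2,P1] \<in> osimplex 3" "[Q3,Q2,Q1] \<in> osimplex 3"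
    using pos sums by (auto simp: os3 algebra_simps)
  have pa: "I [P1,P3,P2] [Q1,Q3,Q2] = I [P1,P2,P3] [Q1,Q2,Q3]"
    using C2_app[OF C(1) o permutes_swap_id[of 1 "{..<3}" 2]] unfolding perm3a by simp
  have pb: "I [P3,P2,P1] [Q3,Q2,Q1] = I [P1,P2,P3] [Q1,Q2,Q3]"
    using C2_app[OF C(1) o permutes_swap_id[of 0 "{..<3}" 2]] unfolding perm3b by simp
  have cases: "P3 = Q3 \<or> P1 = Q1 \<or> P2 = Q2 \<or> (P1-Q1)*(P2-Q2) > 0 \<or> (P1-Q1)*(P3-Q3) > 0 \<or> (P3-Q3)*(P2-Q2) > 0"
  proof -
    have "P3 = Q3 \<or> P1 = Q1 \<or> P2 = Q2 \<or> (P1>Q1 \<and> P2>Q2) \<or> (P1<Q1 \<and> P2<Q2) \<or> (P1>Q1 \<and> P3>Q3)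
       \<or> (P1<Q1 \<and> P3<Q3) \<or> (P3>Q3 \<and> P2>Q2) \<or> (P3<Q3 \<and> P2<Q2)" using sums by (smt (verit))
    then show ?thesis by (auto simp: zero_less_mult_iff)
  qed
  then show ?thesis
  proof (elim disjE)
    assume "P3 = Q3" then show ?thesis using mix3[OF C pos(1,2,3,4,5)] sums by simp
  next
    assume "P1 = Q1" then show ?thesis using mix3[OF C pos(3,2,1,6,5)] sums pb by (simp add: algebra_simps)
  next
    assume "P2 = Q2" then show ?thesis using mix3[OF C pos(1,3,2,4,6)] sums pa by (simp add: algebra_simps)
  next
    assume "(P1-Q1)*(P2-Q2) > 0" then show ?thesis using rep3_R[OF C o] by simp
  next
    assume "(P1-Q1)*(P3-Q3) > 0" then show ?thesis using rep3_R[OF C oa] pa by (simp add: algebra_simps)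
  next
    assume "(P3-Q3)*(P2-Q2) > 0" then show ?thesis using rep3_R[OF C ob] pb by (simp add: algebra_simps)
  qed
qed

definition PSI where "PSI I r = GG I r 1 / r"

lemma GG_psi:
  assumes "\<pi> > 0" "\<rho> > 0"
  shows "GG I \<pi> \<rho> = \<pi> * PSI I (\<pi>/\<rho>)"
proof -
  have "GG I \<pi> \<rho> = GG I (\<rho>*(\<pi>/\<rho>)) (\<rho>*1)" using assms by simp
  also have "\<dots> = \<rho> * GG I (\<pi>/\<rho>) 1" by (rule GG_homog) (use assms in simp)
  also have "\<dots> = \<pi> * PSI I (\<pi>/\<rho>)" using assms by (simp add: PSI_def)
  finally show ?thesis .
qed

lemma star:
  assumes C: "C2 I" "C3 I" "C4 I" and xy: "0<x" "x<1" "0<y" "y<1" and st: "0<s" "s<1" "0<t" "t<1"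
  shows "GG I (x * s) (y*t) + GG I (x*(1-s)) (y*(1-t)) = GG I x y + x * (GG I s t + GG I (1-s) (1-t))"
proof -
  have o: "[x,1-x] \<in> osimplex 2" "[y,1-y] \<in> osimplex 2" "[s,1-s] \<in> osimplex 2" "[t,1-t] \<in> osimplex 2"
    using xy st by (simp_all add: os2)
  note H = C4_2[OF C(3) o os1 os1]
  have o3: "[x * s, x*(1-s), 1-x] \<in> osimplex 3" "[y*t, y*(1-t), 1-y] \<in> osimplex 3"
    using xy st by (simp_all add: os3 algebra_simps)
  have "I [x * s, x*(1-s), 1-x] [y*t, y*(1-t), 1-y] = bin I x y + x * bin I s t"
    using H unfolding C3_app[OF C(2) os1] by (simp add: bin_def)
  then have "GG I (x * s) (y*t) + GG I (x*(1-s)) (y*(1-t)) + GG I (1-x) (1-y)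
      = GG I x y + GG I (1-x) (1-y) + x * (GG I s t + GG I (1-s) (1-t))"
    unfolding rep3[OF C o3] rep2[OF C xy] rep2[OF C st] by simp
  then show ?thesis by simp
qed

definition DD where "DD I a r = PSI I (a*r) - PSI I a - PSI I r"

lemma PSI1: "PSI I 1 = 0" by (simp add: PSI_def GG_diag)

lemma Deq:
  assumes C: "C2 I" "C3 I" "C4 I" and a: "a > 0" and st: "0<s" "s<1" "0<t" "t<1"
  shows "s * DD I a (s/t) + (1-s) * DD I a ((1-s)/(1-t)) = 0"
proof -
  define x where "x = a/(1+a)"
  define y where "y = 1/(1+a)"
  have xy: "0<x" "x<1" "0<y" "y<1" using a by (simp_all add: x_def y_def)
  have xa: "x/y = a" using a by (simp add: x_def y_def)
  note S = star[OF C xy st]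
  have e1: "(x * s)/(y*t) = a*(s/t)" "(x*(1-s))/(y*(1-t)) = a*((1-s)/(1-t))"
    unfolding xa[symmetric] using xy st by (simp_all add: field_simps)
  have g1: "GG I (x * s) (y*t) = x * s * PSI I (a*(s/t))"
    using GG_psi[of "x * s" "y*t" I] xy st unfolding e1 by simp
  have g2: "GG I (x*(1-s)) (y*(1-t)) = x*(1-s) * PSI I (a*((1-s)/(1-t)))"
    using GG_psi[of "x*(1-s)" "y*(1-t)" I] xy st unfolding e1 by simp
  have g3: "GG I x y = x * PSI I a" using GG_psi[of x y I] xy xa by simp
  have g4: "GG I s t = s * PSI I (s/t)" "GG I (1-s) (1-t) = (1-s) * PSI I ((1-s)/(1-t))"
    using GG_psi[of s t I] GG_psi[of "1-s" "1-t" I] st by simp_all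
  have "x * (s * PSI I (a*(s/t)) + (1-s) * PSI I (a*((1-s)/(1-t))))
      = x * (PSI I a + s * PSI I (s/t) + (1-s) * PSI I ((1-s)/(1-t)))"
    using S unfolding g1 g2 g3 g4 by (simp add: algebra_simps)
  then have "s * PSI I (a*(s/t)) + (1-s) * PSI I (a*((1-s)/(1-t)))
      = PSI I a + s * PSI I (s/t) + (1-s) * PSI I ((1-s)/(1-t))"
    using xy by simp
  then show ?thesis by (simp add: DD_def algebra_simps)
qed

lemma Deq2:
  assumes C: "C2 I" "C3 I" "C4 I" and a: "a > 0" and r: "r1 > 1" "0 < r2" "r2 < 1"
  shows "r1*(1-r2) * DD I a r1 + r2*(r1-1) * DD I a r2 = 0"
proof -
  define t where "t = (1-r2)/(r1-r2)"
  define s where "s = r1 * t"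
  have d: "r1 - r2 > 0" using r by simp
  have st: "0<s" "s<1" "0<t" "t<1" using r d
    by (auto simp: s_def t_def field_simps)
  have q1: "s/t = r1" using st by (simp add: s_def)
  have s1: "s = r1*(1-r2)/(r1-r2)" "1-s = r2*(r1-1)/(r1-r2)" using d by (simp_all add: s_def t_def field_simps)
  have t1: "1-t = (r1-1)/(r1-r2)" using d by (simp add: t_def field_simps)
  have q2: "(1-s)/(1-t) = r2" unfolding s1(2) t1 using r d by simp
  have eq: "s * DD I a r1 + (1-s) * DD I a r2 = 0" using Deq[OF C a st] unfolding q1 q2 .
  have m1: "(r1-r2) * s = r1*(1-r2)" "(r1-r2)*(1-s) = r2*(r1-1)" using s1 d by simp_all
  from eq have "(r1-r2)*(s * DD I a r1 + (1-s) * DD I a r2) = 0" by simp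
  then have "((r1-r2) * s) * DD I a r1 + ((r1-r2)*(1-s)) * DD I a r2 = 0"
    by (simp only: distrib_left mult.assoc)
  then show ?thesis unfolding m1 .
qed

lemma D_form:
  assumes C: "C2 I" "C3 I" "C4 I" and a: "a > 0" and r: "r > 0"
  shows "DD I a r = 2 * DD I a 2 * (1 - 1/r)"
proof -
  have h: "DD I a (1/2) = - 2 * DD I a 2" using Deq2[OF C a, of 2 "1/2"] by simp
  consider "r > 1" | "r < 1" | "r = 1" by linarith
  then show ?thesis
  proof cases
    case 1
    have "r*(1/2) * DD I a r + (1/2)*(r-1) * DD I a (1/2) = 0" using Deq2[OF C a 1, of "1/2"] by simp
    then have "r * DD I a r = 2 * DD I a 2 * (r - 1)" unfolding h by (simp add: algebra_simps)
    then show ?thesis using r by (simp add: field_simps)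
  next
    case 2
    have "2*(1-r) * DD I a 2 + r*(2-1) * DD I a r = 0" using Deq2[OF C a, of 2 r] 2 r by simp
    then show ?thesis using r by (simp add: field_simps)
  next
    case 3 then show ?thesis by (simp add: DD_def PSI1)
  qed
qed

lemma core:
  assumes C: "C2 I" "C3 I" "C4 I"
  shows "\<exists>ch. (\<forall>a b. a > 0 \<longrightarrow> b > 0 \<longrightarrow> ch (a*b) = ch a + ch b) \<and>
    (\<forall>x y. 0<x \<longrightarrow> x<1 \<longrightarrow> 0<y \<longrightarrow> y<1 \<longrightarrow> bin I x y = x * ch (x/y) + (1-x) * ch ((1-x)/(1-y)))"
proof -
  define \<beta> where "\<beta> = 4 * DD I 2 2"
  have Dab: "DD I a r = \<beta> * (1 - 1/a) * (1 - 1/r)" if "a > 0" "r > 0" for a r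
  proof -
    have "DD I a 2 = DD I 2 a" by (simp add: DD_def mult.commute)
    also have "\<dots> = 2 * DD I 2 2 * (1 - 1/a)" by (rule D_form[OF C]) (use that in auto)
    finally have "DD I a 2 = 2 * DD I 2 2 * (1 - 1/a)" .
    then show ?thesis using D_form[OF C that] by (simp add: \<beta>_def)
  qed
  define ch where "ch r = PSI I r + \<beta> * (1 - 1/r)" for r
  have mult: "ch (a*b) = ch a + ch b" if "a > 0" "b > 0" for a b
  proof -
    have "PSI I (a*b) = PSI I a + PSI I b + \<beta> * (1 - 1/a) * (1 - 1/b)"
      using Dab[OF that] by (simp add: DD_def)
    then show ?thesis using that by (simp add: ch_def field_simps)
  qed
  have rep: "bin I x y = x * ch (x/y) + (1-x) * ch ((1-x)/(1-y))" if "0<x" "x<1" "0<y" "y<1" for x y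
  proof -
    have "bin I x y = x * PSI I (x/y) + (1-x) * PSI I ((1-x)/(1-y))"
      using rep2[OF C that] GG_psi[of x y I] GG_psi[of "1-x" "1-y" I] that by simp
    moreover have F2: "x * (1 - 1/(x/y)) = x - y" "(1-x) * (1 - 1/((1-x)/(1-y))) = y - x"
      using that by (simp_all add: field_simps)
    moreover have "x * ch (x/y) = x * PSI I (x/y) + \<beta> * (x * (1 - 1/(x/y)))"
       "(1-x) * ch ((1-x)/(1-y)) = (1-x) * PSI I ((1-x)/(1-y)) + \<beta> * ((1-x) * (1 - 1/((1-x)/(1-y))))"
      by (simp_all add: ch_def algebra_simps)
    moreover have "\<beta> * (x * (1 - 1/(x/y))) = \<beta>*x - \<beta>*y"
       "\<beta> * ((1-x) * (1 - 1/((1-x)/(1-y)))) = \<beta>*y - \<beta>*x"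
      unfolding F2 by (simp_all add: algebra_simps)
    ultimately show ?thesis by linarith
  qed
  show ?thesis using mult rep by blast
qed

lemma add_nat_mult:
  assumes add: "\<And>s t. A (s+t) = A s + A t"
  shows "A (real n * t) = real n * A t"
proof (induction n)
  case 0
  have "A 0 = A 0 + A 0" using add[of 0 0] by simp
  then show ?case by simp
next
  case (Suc n)
  have "A (real (Suc n) * t) = A (real n * t + t)" by (simp add: algebra_simps)
  also have "\<dots> = real n * A t + A t" using add Suc by simp
  finally show ?case by (simp add: algebra_simps)
qed

lemma cos_gt_half_bound:
  assumes h: "\<And>n::nat. n \<ge> 1 \<Longrightarrow> cos (z / real n) > 1/2"
  shows "\<bar>z\<bar> < pi/3"
proof (rule ccontr)
  assume "\<not> \<bar>z\<bar> < pi/3"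
  then have z: "\<bar>z\<bar> \<ge> pi/3" by simp
  define n where "n = nat \<lfloor>3*\<bar>z\<bar>/pi\<rfloor>"
  have q: "3*\<bar>z\<bar>/pi \<ge> 1" using z pi_gt_zero by (simp add: field_simps)
  then have n1: "n \<ge> 1" unfolding n_def by linarith
  have nle: "real n \<le> 3*\<bar>z\<bar>/pi" "3*\<bar>z\<bar>/pi < real n + 1" using q unfolding n_def by linarith+
  have np: "real n > 0" using n1 by simp
  define w where "w = \<bar>z\<bar> / real n"
  have w1: "w \<ge> pi/3" using nle(1) np pi_gt_zero by (simp add: w_def field_simps)
  have "\<bar>z\<bar> < pi/3 * (real n + 1)" using nle(2) pi_gt_zero by (simp add: field_simps)
  also have "\<dots> \<le> pi/3 * (2 * real n)" using n1 pi_gt_zero by (intro mult_left_mono) auto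
  finally have w2: "w \<le> pi" using np pi_gt_zero by (simp add: w_def field_simps)
  have "cos w \<le> cos (pi/3)" using w1 w2 pi_gt_zero by (subst cos_mono_le_eq) auto
  then have "cos w \<le> 1/2" by (simp add: cos_60)
  moreover have "cos (z / real n) = cos w"
    by (cases "z \<ge> 0") (simp_all add: w_def abs_if minus_divide_left[symmetric])
  ultimately show False using h[OF n1] by simp
qed

lemma additive_bounded_linear:
  fixes A :: "real \<Rightarrow> real"
  assumes add: "\<And>s t. A (s+t) = A s + A t" and eta: "\<eta> > 0"
    and bd: "\<And>t. 0 \<le> t \<Longrightarrow> t < \<eta> \<Longrightarrow> \<bar>A t\<bar> \<le> B"
  shows "A t = t * A 1"
proof -
  define D where "D t = A t - t * A 1" for t
  have Dadd: "D (s+t) = D s + D t" for s t by (simp add: D_def add algebra_simps)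
  have D1: "D 1 = 0" by (simp add: D_def)
  have Dn: "D (real n * t) = real n * D t" for n t by (rule add_nat_mult[OF Dadd])
  have D0: "D 0 = 0" using Dn[of 0 0] by simp
  have Dneg: "D (-t) = - D t" for t using Dadd[of t "-t"] D0 by simp
  have Dnat: "D (real n) = 0" for n using Dn[of n 1] D1 by simp
  have Dint: "D (of_int j) = 0" for j
  proof (cases j rule: int_cases)
    case (nonneg n) then show ?thesis using Dnat[of n] by simp
  next
    case (neg n) then have "(of_int j :: real) = - real (Suc n)" by simp
    then show ?thesis using Dnat[of "Suc n"] Dneg[of "real (Suc n)"] by simp
  qed
  define B1 where "B1 = B + \<eta> * \<bar>A 1\<bar>"
  have bd1: "\<bar>D t\<bar> \<le> B1" if "0 \<le> t" "t < \<eta>" for t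
  proof -
    have "\<bar>t * A 1\<bar> \<le> \<eta> * \<bar>A 1\<bar>" using that by (simp add: abs_mult mult_right_mono)
    moreover have "\<bar>D t\<bar> \<le> \<bar>A t\<bar> + \<bar>t * A 1\<bar>" unfolding D_def by (rule abs_triangle_ineq4)
    ultimately show ?thesis using bd[OF that] unfolding B1_def by linarith
  qed
  obtain m :: nat where m: "real m > 1/\<eta>" using reals_Archimedean2 by blast
  have "1/\<eta> > 0" using eta by simp
  then have mpos: "real m > 0" using m by linarith
  have meta: "1 / real m < \<eta>" using m mpos eta by (simp add: pos_divide_less_eq mult.commute)
  define B2 where "B2 = real m * B1"
  have bd2: "\<bar>D t\<bar> \<le> B2" if "0 \<le> t" "t < 1" for t
  proof -
    have "t / real m < \<eta>"
    proof -
      have "t / real m < 1 / real m" using that mpos by (simp add: divide_strict_right_mono)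
      also have "\<dots> < \<eta>" by (rule meta)
      finally show ?thesis .
    qed
    moreover have "0 \<le> t / real m" using that mpos by simp
    ultimately have "\<bar>D (t / real m)\<bar> \<le> B1" using bd1 by blast
    moreover have "D t = real m * D (t / real m)" using Dn[of m "t / real m"] mpos by simp
    ultimately show ?thesis using mpos by (simp add: B2_def abs_mult)
  qed
  have bd3: "\<bar>D t\<bar> \<le> B2" for t
  proof -
    have "D t = D (t - of_int \<lfloor>t\<rfloor>) + D (of_int \<lfloor>t\<rfloor>)" using Dadd[of "t - of_int \<lfloor>t\<rfloor>" "of_int \<lfloor>t\<rfloor>"] by simp
    then have "D t = D (t - of_int \<lfloor>t\<rfloor>)" using Dint by simp
    moreover have "0 \<le> t - of_int \<lfloor>t\<rfloor>" "t - of_int \<lfloor>t\<rfloor> < 1" by linarith+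
    ultimately show ?thesis using bd2 by simp
  qed
  have "D t = 0"
  proof (rule ccontr)
    assume ne: "D t \<noteq> 0"
    obtain k :: nat where k: "real k > B2 / \<bar>D t\<bar>" using reals_Archimedean2 by blast
    have "\<bar>D (real k * t)\<bar> = real k * \<bar>D t\<bar>" using Dn by (simp add: abs_mult)
    also have "\<dots> > B2" using k ne by (simp add: pos_divide_less_eq)
    finally show False using bd3[of "real k * t"] by simp
  qed
  then show ?thesis by (simp add: D_def)
qed

lemma mult_cauchy_measurable:
  fixes ch :: "real \<Rightarrow> real"
  assumes mult: "\<And>a b. a > 0 \<Longrightarrow> b > 0 \<Longrightarrow> ch (a*b) = ch a + ch b"
    and meas: "ch \<in> borel_measurable (lebesgue_on {0<..<1})"
  shows "\<exists>c. \<forall>r>0. ch r = c * ln r"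
proof -
  have ch1: "ch 1 = 0" using mult[of 1 1] by simp
  have chJ: "ch \<in> borel_measurable (lebesgue_on {1/8..7/8})"
    by (rule measurable_restrict_mono[OF meas]) auto
  have cint: "(\<lambda>y. cos (c * ch y)) integrable_on {1/8..7/8}" for c
  proof (rule measurable_bounded_by_integrable_imp_integrable[where g="\<lambda>_. 1"])
    show "(\<lambda>y. cos (c * ch y)) \<in> borel_measurable (lebesgue_on {1/8..7/8})"
      using chJ by measurable
  qed auto
  have sint: "(\<lambda>y. sin (c * ch y)) integrable_on {1/8..7/8}" for c
  proof (rule measurable_bounded_by_integrable_imp_integrable[where g="\<lambda>_. 1"])
    show "(\<lambda>y. sin (c * ch y)) \<in> borel_measurable (lebesgue_on {1/8..7/8})"
      using chJ by measurable
  qed auto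
  have cint2: "(\<lambda>y. cos (c * ch y)) integrable_on {a..b}" if "1/8 \<le> a" "b \<le> 7/8" for a b c
    by (rule integrable_on_subinterval[OF cint]) (use that in auto)
  have sint2: "(\<lambda>y. sin (c * ch y)) integrable_on {a..b}" if "1/8 \<le> a" "b \<le> 7/8" for a b c
    by (rule integrable_on_subinterval[OF sint]) (use that in auto)
  have conv: "(\<lambda>k. integral {1/4..1/2} (\<lambda>y. cos ((1 / real (Suc k)) * ch y))) \<longlonglongrightarrow> integral {1/4..1/2::real} (\<lambda>y. 1::real)"
  proof (rule dominated_convergence(2)[where h="\<lambda>_. 1"])
    show "(\<lambda>y. cos ((1 / real (Suc k)) * ch y)) integrable_on {1/4..1/2}" for k
      by (rule cint2) auto
    show "(\<lambda>y. 1::real) integrable_on {1/4..1/2::real}" by auto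
    show "norm (cos ((1 / real (Suc k)) * ch y)) \<le> 1" for k y by simp
    show "(\<lambda>k. cos ((1 / real (Suc k)) * ch y)) \<longlonglongrightarrow> 1" for y
    proof -
      have "(\<lambda>k. ch y / real (Suc k)) \<longlonglongrightarrow> 0"
        using LIMSEQ_Suc[OF lim_const_over_n[of "ch y"]] by simp
      then have "(\<lambda>k. cos (ch y / real (Suc k))) \<longlonglongrightarrow> cos 0" by (rule tendsto_cos)
      then show ?thesis by simp
    qed
  qed
  then have "eventually (\<lambda>k. integral {1/4..1/2} (\<lambda>y. cos ((1 / real (Suc k)) * ch y)) > 0) sequentially"
    by (rule order_tendstoD(1)) simp
  then obtain k where k: "integral {1/4..1/2} (\<lambda>y. cos ((1 / real (Suc k)) * ch y)) > 0"
    by (meson eventually_sequentially order_refl)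
  define \<epsilon> where "\<epsilon> = 1 / real (Suc k)"
  have epos: "\<epsilon> > 0" by (simp add: \<epsilon>_def)
  define fc where "fc = (\<lambda>y. cos (\<epsilon> * ch y))"
  define fs where "fs = (\<lambda>y. sin (\<epsilon> * ch y))"
  define C where "C = integral {1/4..1/2} fc"
  define S where "S = integral {1/4..1/2} fs"
  have Cpos: "C > 0" using k by (simp add: C_def fc_def \<epsilon>_def)
  have ic: "fc integrable_on {1/4..1/2}" unfolding fc_def by (rule cint2) auto
  have isn: "fs integrable_on {1/4..1/2}" unfolding fs_def by (rule sint2) auto
  define Pc where "Pc x = integral {1/8..x} fc" for x
  define Ps where "Ps x = integral {1/8..x} fs" for x
  have cPc: "continuous_on {1/8..7/8} Pc" unfolding Pc_def fc_def
    by (rule indefinite_integral_continuous_1[OF cint])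
  have cPs: "continuous_on {1/8..7/8} Ps" unfolding Ps_def fs_def
    by (rule indefinite_integral_continuous_1[OF sint])
  have stretch: "integral {1/4..1/2} (\<lambda>y. f (r*y)) = (P (r/2) - P (r/4)) / r"
    if r: "1/2 \<le> r" "r \<le> 3/2" and fint: "\<And>a b. 1/8 \<le> a \<Longrightarrow> b \<le> 7/8 \<Longrightarrow> f integrable_on {a..b}"
      and P: "\<And>x. P x = integral {1/8..x} f" for f :: "real \<Rightarrow> real" and P r
  proof -
    have rp: "r > 0" using r by simp
    have i1: "(f has_integral integral {r/4..r/2} f) {r/4..r/2}"
      by (rule integrable_integral, rule fint) (use r in auto)
    have im: "(\<lambda>x. x / r) ` {r/4..r/2} = {1/4..1/2}" using rp by simp
    have "((\<lambda>x. f (r*x)) has_integral (1/\<bar>r\<bar>) *\<^sub>R integral {r/4..r/2} f) {1/4..1/2}"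
      using has_integral_stretch_real[OF i1, of r] rp unfolding im by simp
    then have "integral {1/4..1/2} (\<lambda>y. f (r*y)) = integral {r/4..r/2} f / r"
      using rp by (simp add: integral_unique)
    moreover have "integral {1/8..r/4} f + integral {r/4..r/2} f = integral {1/8..r/2} f"
      by (rule Henstock_Kurzweil_Integration.integral_combine) (use r fint in auto)
    ultimately show ?thesis unfolding P by simp
  qed
  have idc: "integral {1/4..1/2} (\<lambda>y. fc (r*y)) = cos (\<epsilon> * ch r) * C - sin (\<epsilon> * ch r) * S"
    if "r > 0" for r
  proof -
    have "integral {1/4..1/2} (\<lambda>y. fc (r*y)) = integral {1/4..1/2} (\<lambda>y. cos (\<epsilon> * ch r) * fc y - sin (\<epsilon> * ch r) * fs y)"
    proof (rule integral_cong)
      fix y :: real assume "y \<in> {1/4..1/2}"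
      then have "ch (r*y) = ch r + ch y" using that mult by simp
      then show "fc (r*y) = cos (\<epsilon> * ch r) * fc y - sin (\<epsilon> * ch r) * fs y"
        by (simp add: fc_def fs_def distrib_left cos_add)
    qed
    also have "\<dots> = cos (\<epsilon> * ch r) * C - sin (\<epsilon> * ch r) * S"
      unfolding C_def S_def
      by (subst integral_diff) (use ic isn in \<open>auto intro!: integrable_on_mult_right\<close>)
    finally show ?thesis .
  qed
  have ids: "integral {1/4..1/2} (\<lambda>y. fs (r*y)) = sin (\<epsilon> * ch r) * C + cos (\<epsilon> * ch r) * S"
    if "r > 0" for r
  proof -
    have "integral {1/4..1/2} (\<lambda>y. fs (r*y)) = integral {1/4..1/2} (\<lambda>y. sin (\<epsilon> * ch r) * fc y + cos (\<epsilon> * ch r) * fs y)"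
    proof (rule integral_cong)
      fix y :: real assume "y \<in> {1/4..1/2}"
      then have "ch (r*y) = ch r + ch y" using that mult by simp
      then show "fs (r*y) = sin (\<epsilon> * ch r) * fc y + cos (\<epsilon> * ch r) * fs y"
        by (simp add: fc_def fs_def distrib_left sin_add)
    qed
    also have "\<dots> = sin (\<epsilon> * ch r) * C + cos (\<epsilon> * ch r) * S"
      unfolding C_def S_def
      by (subst integral_add) (use ic isn in \<open>auto intro!: integrable_on_mult_right\<close>)
    finally show ?thesis .
  qed
  define Q where "Q r = (C * ((Pc (r/2) - Pc (r/4)) / r) + S * ((Ps (r/2) - Ps (r/4)) / r)) / (C^2 + S^2)" for r
  have CS: "C^2 + S^2 > 0" using Cpos by (simp add: add_pos_nonneg)
  have Qeq: "cos (\<epsilon> * ch r) = Q r" if r: "1/2 \<le> r" "r \<le> 3/2" for r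
  proof -
    have rp: "r > 0" using r by simp
    have e1: "(Pc (r/2) - Pc (r/4)) / r = cos (\<epsilon> * ch r) * C - sin (\<epsilon> * ch r) * S"
      using stretch[OF r, of fc Pc] idc[OF rp] cint2 by (simp add: Pc_def fc_def)
    have e2: "(Ps (r/2) - Ps (r/4)) / r = sin (\<epsilon> * ch r) * C + cos (\<epsilon> * ch r) * S"
      using stretch[OF r, of fs Ps] ids[OF rp] sint2 by (simp add: Ps_def fs_def)
    have "C * ((Pc (r/2) - Pc (r/4)) / r) + S * ((Ps (r/2) - Ps (r/4)) / r)
        = C * (cos (\<epsilon> * ch r) * C - sin (\<epsilon> * ch r) * S) + S * (sin (\<epsilon> * ch r) * C + cos (\<epsilon> * ch r) * S)"
      by (simp only: e1 e2)
    also have "\<dots> = cos (\<epsilon> * ch r) * (C^2 + S^2)" by (simp add: algebra_simps power2_eq_square)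
    finally have "C * ((Pc (r/2) - Pc (r/4)) / r) + S * ((Ps (r/2) - Ps (r/4)) / r) = cos (\<epsilon> * ch r) * (C^2 + S^2)" .
    then show ?thesis using CS Cpos by (simp add: Q_def)
  qed
  have cQ: "continuous_on {1/2..3/2} Q"
  proof -
    have a: "continuous_on {1/2..3/2} (\<lambda>r. Pc (r/2))"
      by (rule continuous_on_compose2[OF cPc]) (auto intro!: continuous_intros)
    have b: "continuous_on {1/2..3/2} (\<lambda>r. Pc (r/4))"
      by (rule continuous_on_compose2[OF cPc]) (auto intro!: continuous_intros)
    have c: "continuous_on {1/2..3/2} (\<lambda>r. Ps (r/2))"
      by (rule continuous_on_compose2[OF cPs]) (auto intro!: continuous_intros)
    have d: "continuous_on {1/2..3/2} (\<lambda>r. Ps (r/4))"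
      by (rule continuous_on_compose2[OF cPs]) (auto intro!: continuous_intros)
    show ?thesis unfolding Q_def using CS
      by (intro continuous_intros a b c d) auto
  qed
  have Q1: "Q 1 = 1" using Qeq[of 1] ch1 by simp
  obtain d where d: "d > 0" and dQ: "\<And>r. r \<in> {1/2..3/2} \<Longrightarrow> dist r 1 < d \<Longrightarrow> dist (Q r) (Q 1) < 1/2"
    using cQ[unfolded continuous_on_iff, rule_format, of 1 "1/2"] by auto
  define \<delta> where "\<delta> = min d (1/2)"
  have dpos: "\<delta> > 0" using d by (simp add: \<delta>_def)
  have cosb: "cos (\<epsilon> * ch r) > 1/2" if "1 \<le> r" "r < 1 + \<delta>" for r
  proof -
    have r: "r \<in> {1/2..3/2}" "dist r 1 < d" using that by (auto simp: \<delta>_def dist_real_def)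
    have "dist (Q r) 1 < 1/2" using dQ[OF r] Q1 by simp
    then have "Q r > 1/2" unfolding dist_real_def by linarith
    then show ?thesis using Qeq r(1) by simp
  qed
  define A where "A t = ch (exp t)" for t
  have Aadd: "A (s+t) = A s + A t" for s t by (simp add: A_def exp_add mult)
  define \<eta> where "\<eta> = ln (1 + \<delta>)"
  have etap: "\<eta> > 0" using dpos by (simp add: \<eta>_def)
  have cosA: "cos (\<epsilon> * A t) > 1/2" if "0 \<le> t" "t < \<eta>" for t
  proof -
    have "1 \<le> exp t" using that by simp
    moreover have "exp t < 1 + \<delta>"
    proof -
      have "exp \<eta> = 1 + \<delta>" using dpos by (simp add: \<eta>_def)
      moreover have "exp t < exp \<eta>" using that by simp
      ultimately show ?thesis by simp
    qed
    ultimately show ?thesis using cosb by (simp add: A_def)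
  qed
  have Abd: "\<bar>A t\<bar> \<le> pi / (3 * \<epsilon>)" if t: "0 \<le> t" "t < \<eta>" for t
  proof -
    have "cos ((\<epsilon> * A t) / real n) > 1/2" if n: "n \<ge> 1" for n :: nat
    proof -
      have np: "real n > 0" using n by simp
      have "A t = real n * A (t / real n)" using add_nat_mult[OF Aadd, of n "t / real n"] np by simp
      then have "(\<epsilon> * A t) / real n = \<epsilon> * A (t / real n)" using np by simp
      moreover have "0 \<le> t / real n" "t / real n < \<eta>"
      proof -
        show "0 \<le> t / real n" using t np by simp
        have "t * 1 \<le> t * real n" using t n by (intro mult_left_mono) auto
        then have "t / real n \<le> t" using np by (simp add: divide_le_eq)
        then show "t / real n < \<eta>" using t by simp
      qed
      ultimately show ?thesis using cosA by simp
    qed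
    then have "\<bar>\<epsilon> * A t\<bar> < pi / 3" by (rule cos_gt_half_bound)
    then have "\<epsilon> * \<bar>A t\<bar> < pi / 3" using epos by (simp add: abs_mult)
    then have "\<bar>A t\<bar> * \<epsilon> < pi / 3" by (simp add: mult.commute)
    then have "\<bar>A t\<bar> < pi / 3 / \<epsilon>" using epos by (simp only: pos_less_divide_eq)
    moreover have "pi / 3 / \<epsilon> = pi / (3 * \<epsilon>)" by (simp only: divide_divide_eq_left)
    ultimately show ?thesis by linarith
  qed
  have Alin: "A t = t * A 1" for t
    by (rule additive_bounded_linear[OF Aadd etap Abd])
  show ?thesis
  proof (intro exI allI impI)
    fix r :: real assume "r > 0"
    then have "ch r = A (ln r)" by (simp add: A_def)
    then show "ch r = A 1 * ln r" using Alin[of "ln r"] by (simp only: mult.commute)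
  qed
qed

definition emb1 :: "real \<Rightarrow> nat \<Rightarrow> real" where "emb1 y = (\<lambda>i\<in>{..<1::nat}. y)"

lemma emb1_meas: "emb1 \<in> lborel \<rightarrow>\<^sub>M Pi\<^sub>M {..<1} (\<lambda>_. lborel)"
  unfolding emb1_def by (rule measurable_restrict) simp

lemma psf: "product_sigma_finite (\<lambda>_::nat. lborel::real measure)"
  by (simp add: product_sigma_finite_def lborel.sigma_finite_measure_axioms)

lemma distr_emb1: "distr lborel (Pi\<^sub>M {..<1} (\<lambda>_. lborel)) emb1 = Pi\<^sub>M {..<1} (\<lambda>_. lborel)"
proof (rule product_sigma_finite.PiM_eqI[OF psf])
  show "finite {..<1::nat}" by simp
  show "sets (distr lborel (Pi\<^sub>M {..<1} (\<lambda>_. lborel)) emb1) = sets (Pi\<^sub>M {..<1::nat} (\<lambda>_. lborel))" by simp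
  fix A :: "nat \<Rightarrow> real set" assume A: "\<And>i. i \<in> {..<1} \<Longrightarrow> A i \<in> sets lborel"
  have "Pi\<^sub>E {..<1} A \<in> sets (Pi\<^sub>M {..<1} (\<lambda>_. lborel))" using A by (intro sets_PiM_I_finite) auto
  then have "emeasure (distr lborel (Pi\<^sub>M {..<1} (\<lambda>_. lborel)) emb1) (Pi\<^sub>E {..<1} A)
      = emeasure lborel (emb1 -` Pi\<^sub>E {..<1} A \<inter> space lborel)"
    by (rule emeasure_distr[OF emb1_meas])
  also have "emb1 -` Pi\<^sub>E {..<1} A \<inter> space lborel = A 0"
    by (auto simp: emb1_def PiE_def extensional_def Pi_def)
  finally show "emeasure (distr lborel (Pi\<^sub>M {..<1} (\<lambda>_. lborel)) emb1) (Pi\<^sub>E {..<1} A)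
      = (\<Prod>i\<in>{..<1}. emeasure lborel (A i))" by simp
qed

lemma null_emb1:
  assumes N: "N \<in> null_sets (Pi\<^sub>M {..<1} (\<lambda>_. lborel))"
  shows "emb1 -` N \<in> null_sets lborel"
proof -
  have Ns: "N \<in> sets (Pi\<^sub>M {..<1} (\<lambda>_. lborel))" using N by auto
  have "emeasure lborel (emb1 -` N \<inter> space lborel) = emeasure (distr lborel (Pi\<^sub>M {..<1} (\<lambda>_. lborel)) emb1) N"
    by (rule emeasure_distr[OF emb1_meas Ns, symmetric])
  also have "\<dots> = 0" using N unfolding distr_emb1 by auto
  finally have "emeasure lborel (emb1 -` N) = 0" by simp
  moreover have "emb1 -` N \<in> sets lborel"
    using measurable_sets[OF emb1_meas Ns] by simp
  ultimately show ?thesis by auto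
qed

lemma completion_meas_emb1:
  fixes H :: "(nat \<Rightarrow> real) \<Rightarrow> real"
  assumes H: "H \<in> borel_measurable (completion (Pi\<^sub>M {..<1} (\<lambda>_. lborel)))"
  shows "(\<lambda>y. H (emb1 y)) \<in> borel_measurable lebesgue"
proof -
  obtain g where g: "g \<in> borel_measurable (Pi\<^sub>M {..<1} (\<lambda>_. lborel))"
    and ae: "AE x in Pi\<^sub>M {..<1} (\<lambda>_. lborel). H x = g x"
    using completion_ex_borel_measurable_real[OF H] by blast
  obtain N where N: "N \<in> null_sets (Pi\<^sub>M {..<1} (\<lambda>_. lborel))"
    and sub: "{x \<in> space (Pi\<^sub>M {..<1} (\<lambda>_. lborel)). \<not> H x = g x} \<subseteq> N"
    using ae unfolding eventually_ae_filter by blast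
  have gm: "(\<lambda>y. g (emb1 y)) \<in> borel_measurable lebesgue"
    using measurable_comp[OF emb1_meas g] by (simp add: comp_def measurable_completion)
  have neg: "negligible (emb1 -` N)"
    using null_emb1[OF N] by (simp add: negligible_iff_null_sets null_sets_completionI)
  have "(\<lambda>y. g (emb1 y)) measurable_on UNIV"
    using gm by (simp add: measurable_on_iff_borel_measurable)
  then have "(\<lambda>y. H (emb1 y)) measurable_on UNIV"
  proof (rule measurable_on_spike[OF _ neg])
    fix y assume "y \<in> UNIV - emb1 -` N"
    moreover have "emb1 y \<in> space (Pi\<^sub>M {..<1} (\<lambda>_. lborel))"
      using measurable_space[OF emb1_meas] by simp
    ultimately show "H (emb1 y) = g (emb1 y)" using sub by blast
  qed
  then show ?thesis by (simp add: measurable_on_iff_borel_measurable)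
qed

lemma C1_meas:
  assumes C1: "C1 I" and p: "p \<in> osimplex 2"
  shows "(\<lambda>y. I p [y, 1-y]) \<in> borel_measurable (lebesgue_on {0<..<1})"
proof -
  have "simplex_measurable 1 (\<lambda>q. I p q)"
    using C1 p unfolding C1_def by (simp add: numeral_2_eq_2)
  then have H: "(\<lambda>x. if x \<in> chart_dom 1 then I p (chart 1 x) else 0) \<in> borel_measurable (lebesgue_m 1)"
    unfolding simplex_measurable_def .
  have "(\<lambda>y. (\<lambda>x. if x \<in> chart_dom 1 then I p (chart 1 x) else 0) (emb1 y)) \<in> borel_measurable lebesgue"
    using completion_meas_emb1[OF H[unfolded lebesgue_m_def]] .
  then have m: "(\<lambda>y. if emb1 y \<in> chart_dom 1 then I p (chart 1 (emb1 y)) else 0) \<in> borel_measurable (lebesgue_on {0<..<1})"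
    by (rule measurable_restrict_space1)
  have eq: "(\<lambda>y. if emb1 y \<in> chart_dom 1 then I p (chart 1 (emb1 y)) else 0) y = I p [y, 1-y]"
    if "y \<in> space (lebesgue_on {0<..<1})" for y
  proof -
    have y: "0 < y" "y < 1" using that by auto
    have e0: "emb1 y 0 = y" by (simp add: emb1_def)
    have "emb1 y \<in> chart_dom 1" using y e0 by (simp add: chart_dom_def)
    moreover have "chart 1 (emb1 y) = [y, 1-y]" using e0 by (simp add: chart_def)
    ultimately show ?thesis by simp
  qed
  show ?thesis by (rule measurable_cong[THEN iffD1, OF eq m])
qed

lemma relent_Nil: "relent [] q = 0" by (simp add: relent_def)

lemma relent_Cons: "relent (a#p) (b#q) = a * ln (a/b) + relent p q"
  unfolding relent_def by (simp add: sum.lessThan_Suc_shift del: sum.lessThan_Suc)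

lemma relent2: "relent [x, 1-x] [y, 1-y] = x * ln (x/y) + (1-x) * ln ((1-x)/(1-y))"
  by (simp add: relent_Cons relent_Nil)

lemma relent_append:
  "length xs = length ys \<Longrightarrow> relent (xs @ xs') (ys @ ys') = relent xs ys + relent xs' ys'"
proof (induction xs arbitrary: ys)
  case Nil then show ?case by (simp add: relent_Nil)
next
  case (Cons a xs)
  then obtain b ys0 where ys: "ys = b # ys0" by (cases ys) auto
  with Cons show ?case by (simp add: relent_Cons)
qed

lemma relent_scale:
  assumes "a > 0" "b > 0" "length m = length n" "\<forall>x\<in>set m. x > 0" "\<forall>x\<in>set n. x > 0"
  shows "relent (map ((*) a) m) (map ((*) b) n) = ln (a/b) * a * sum_list m + a * relent m n"
  using assms(3-5)
proof (induction m arbitrary: n)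
  case Nil then show ?case by (simp add: relent_Nil)
next
  case (Cons x m)
  then obtain y n0 where n: "n = y # n0" by (cases n) auto
  have xy: "x > 0" "y > 0" using Cons.prems n by auto
  have "ln (a*x/(b*y)) = ln (a/b) + ln (x/y)"
  proof -
    have e: "a*x/(b*y) = (a/b)*(x/y)" by simp
    have "ln ((a/b)*(x/y)) = ln (a/b) + ln (x/y)" using assms(1,2) xy by (simp only: ln_mult) simp
    then show ?thesis unfolding e .
  qed
  then have "a * x * ln (a*x/(b*y)) = ln (a/b) * a * x + a * (x * ln (x/y))"
    by (simp add: algebra_simps)
  moreover have "relent (map ((*) a) m) (map ((*) b) n0) = ln (a/b) * a * sum_list m + a * relent m n0"
    using Cons n by auto
  ultimately have "a * x * ln (a*x/(b*y)) + relent (map ((*) a) m) (map ((*) b) n0)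
      = ln (a/b) * a * x + a * (x * ln (x/y)) + (ln (a/b) * a * sum_list m + a * relent m n0)" by simp
  moreover have "relent (map ((*) a) (x#m)) (map ((*) b) n) = a * x * ln (a*x/(b*y)) + relent (map ((*) a) m) (map ((*) b) n0)"
    using n by (simp add: relent_Cons)
  moreover have "ln (a/b) * a * sum_list (x#m) + a * relent (x#m) n = ln (a/b) * a * x + a * (x * ln (x/y)) + (ln (a/b) * a * sum_list m + a * relent m n0)"
    using n by (simp add: relent_Cons distrib_left)
  ultimately show ?case by simp
qed

lemma composite_Cons: "composite (a#p) (m#\<mu>) = map ((*) a) m @ composite p \<mu>"
  by (simp add: composite_def)

lemma relent_chain:
  assumes "length q = length p" "length \<mu> = length p" "length \<nu> = length p"
    "\<forall>x\<in>set p. x > 0" "\<forall>x\<in>set q. x > 0"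
    "\<forall>i<length p. length (\<mu>!i) = length (\<nu>!i) \<and> (\<forall>x\<in>set (\<mu>!i). x>0) \<and> (\<forall>x\<in>set (\<nu>!i). x>0) \<and> sum_list (\<mu>!i) = 1"
  shows "relent (composite p \<mu>) (composite q \<nu>) = relent p q + (\<Sum>i<length p. p!i * relent (\<mu>!i) (\<nu>!i))"
  using assms
proof (induction p arbitrary: q \<mu> \<nu>)
  case Nil then show ?case by (simp add: relent_Nil composite_def)
next
  case (Cons a p)
  obtain b q0 where q: "q = b # q0" using Cons.prems(1) by (cases q) auto
  obtain m \<mu>0 where \<mu>: "\<mu> = m # \<mu>0" using Cons.prems(2) by (cases \<mu>) auto
  obtain n \<nu>0 where \<nu>: "\<nu> = n # \<nu>0" using Cons.prems(3) by (cases \<nu>) auto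
  have ab: "a > 0" "b > 0" using Cons.prems(4,5) q by auto
  have h0: "length m = length n" "\<forall>x\<in>set m. x>0" "\<forall>x\<in>set n. x>0" "sum_list m = 1"
    using Cons.prems(6)[rule_format, of 0] \<mu> \<nu> by auto
  have IH: "relent (composite p \<mu>0) (composite q0 \<nu>0) = relent p q0 + (\<Sum>i<length p. p!i * relent (\<mu>0!i) (\<nu>0!i))"
  proof (rule Cons.IH)
    show "\<forall>i<length p. length (\<mu>0!i) = length (\<nu>0!i) \<and> (\<forall>x\<in>set (\<mu>0!i). x>0) \<and> (\<forall>x\<in>set (\<nu>0!i). x>0) \<and> sum_list (\<mu>0!i) = 1"
    proof (intro allI impI)
      fix i assume "i < length p"
      then show "length (\<mu>0!i) = length (\<nu>0!i) \<and> (\<forall>x\<in>set (\<mu>0!i). x>0) \<and> (\<forall>x\<in>set (\<nu>0!i). x>0) \<and> sum_list (\<mu>0!i) = 1"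
        using Cons.prems(6)[rule_format, of "Suc i"] \<mu> \<nu> by auto
    qed
  qed (use Cons.prems q \<mu> \<nu> in auto)
  have "relent (composite (a#p) \<mu>) (composite q \<nu>)
      = relent (map ((*) a) m) (map ((*) b) n) + relent (composite p \<mu>0) (composite q0 \<nu>0)"
    unfolding q \<mu> \<nu> composite_Cons by (rule relent_append) (simp add: h0)
  also have "\<dots> = ln (a/b) * a + a * relent m n + relent (composite p \<mu>0) (composite q0 \<nu>0)"
    using relent_scale[OF ab h0(1-3)] h0(4) by simp
  finally show ?case
    unfolding IH q \<mu> \<nu> by (simp add: relent_Cons sum.lessThan_Suc_shift algebra_simps del: sum.lessThan_Suc)
qed

lemma permute_vec_nth: "i < length p \<Longrightarrow> permute_vec p \<sigma> ! i = p ! \<sigma> i"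
  by (simp add: permute_vec_def)

lemma length_permute_vec[simp]: "length (permute_vec p \<sigma>) = length p"
  by (simp add: permute_vec_def)

lemma relent_perm:
  assumes "length p = n" "length q = n" "\<sigma> permutes {..<n}"
  shows "relent (permute_vec p \<sigma>) (permute_vec q \<sigma>) = relent p q"
proof -
  define g where "g i = p!i * ln (p!i / q!i)" for i
  have "relent (permute_vec p \<sigma>) (permute_vec q \<sigma>) = (\<Sum>i<n. g (\<sigma> i))"
    unfolding relent_def g_def using assms(1,2) by (intro sum.cong) (auto simp: permute_vec_nth)
  also have "\<dots> = (\<Sum>i<n. g i)" using sum.permute[OF assms(3), of g] by (simp add: comp_def)
  also have "\<dots> = relent p q" using assms(1) by (simp add: relent_def g_def)
  finally show ?thesis .
qed

lemma sum_list_permute: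
  assumes "length p = n" "\<sigma> permutes {..<n}"
  shows "sum_list (permute_vec p \<sigma>) = sum_list p"
proof -
  have "sum_list (permute_vec p \<sigma>) = (\<Sum>i<n. p ! \<sigma> i)"
    using assms(1) by (simp add: sum_list_sum_nth permute_vec_nth atLeast0LessThan)
  also have "\<dots> = (\<Sum>i<n. p ! i)" using sum.permute[OF assms(2), of "\<lambda>i. p ! i"] by (simp add: comp_def)
  also have "\<dots> = sum_list p" using assms(1) by (simp add: sum_list_sum_nth atLeast0LessThan)
  finally show ?thesis .
qed

lemma permute_osimplex:
  assumes p: "p \<in> osimplex n" and s: "\<sigma> permutes {..<n}"
  shows "permute_vec p \<sigma> \<in> osimplex n"
proof -
  have lp: "length p = n" using p by (simp add: osimplex_def)
  have "x \<in> set p" if "x \<in> set (permute_vec p \<sigma>)" for x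
  proof -
    from that obtain i where i: "i < n" "x = p ! \<sigma> i" using lp by (auto simp: permute_vec_def)
    have "\<sigma> i < n" using permutes_in_image[OF s] i by simp
    then show ?thesis using i lp by simp
  qed
  then show ?thesis using p lp sum_list_permute[OF lp s] by (auto simp: osimplex_def)
qed

lemma composite_props:
  assumes "length \<mu> = length p" "\<forall>x\<in>set p. 0 < x \<and> x \<le> 1"
    "\<forall>i<length p. (\<forall>x\<in>set (\<mu>!i). 0 < x \<and> x \<le> 1) \<and> sum_list (\<mu>!i) = 1"
  shows "(\<forall>x\<in>set (composite p \<mu>). 0 < x \<and> x \<le> 1) \<and> sum_list (composite p \<mu>) = sum_list p"
  using assms
proof (induction p arbitrary: \<mu>)
  case Nil then show ?case by (simp add: composite_def)
next
  case (Cons a p)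
  obtain m \<mu>0 where \<mu>: "\<mu> = m # \<mu>0" using Cons.prems(1) by (cases \<mu>) auto
  have a: "0 < a" "a \<le> 1" using Cons.prems(2) by auto
  have m: "\<forall>x\<in>set m. 0 < x \<and> x \<le> 1" "sum_list m = 1" using Cons.prems(3)[rule_format, of 0] \<mu> by auto
  have IH: "(\<forall>x\<in>set (composite p \<mu>0). 0 < x \<and> x \<le> 1) \<and> sum_list (composite p \<mu>0) = sum_list p"
  proof (rule Cons.IH)
    show "\<forall>i<length p. (\<forall>x\<in>set (\<mu>0!i). 0 < x \<and> x \<le> 1) \<and> sum_list (\<mu>0!i) = 1"
      using Cons.prems(3) \<mu> by auto
  qed (use Cons.prems \<mu> in auto)
  have "\<forall>x\<in>set (map ((*) a) m). 0 < x \<and> x \<le> 1"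
  proof
    fix x assume "x \<in> set (map ((*) a) m)"
    then obtain y where y: "y \<in> set m" "x = a * y" by auto
    then have "0 < y" "y \<le> 1" using m by auto
    then show "0 < x \<and> x \<le> 1" using a y(2) by (simp add: mult_le_one)
  qed
  moreover have "sum_list (map ((*) a) m) = a" using m(2) by (simp add: sum_list_const_mult)
  ultimately show ?case using IH unfolding \<mu> composite_Cons by auto
qed

lemma length_composite:
  assumes "length \<mu> = length p"
  shows "length (composite p \<mu>) = (\<Sum>i<length p. length (\<mu>!i))"
  using assms
proof (induction p arbitrary: \<mu>)
  case Nil then show ?case by (simp add: composite_def)
next
  case (Cons a p)
  obtain m \<mu>0 where \<mu>: "\<mu> = m # \<mu>0" using Cons.prems(1) by (cases \<mu>) auto
  show ?case using Cons \<mu> by (simp add: composite_Cons sum.lessThan_Suc_shift del: sum.lessThan_Suc)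
qed

definition cx :: "nat \<Rightarrow> (nat \<Rightarrow> real) \<Rightarrow> nat \<Rightarrow> real" where
  "cx m x i = (if i < m then x i else 1 - (\<Sum>j<m. x j))"

lemma chart_nth: "i < Suc m \<Longrightarrow> chart m x ! i = cx m x i"
  by (auto simp: chart_def cx_def nth_append)

lemma length_chart[simp]: "length (chart m x) = Suc m"
  by (simp add: chart_def)

lemma cx_meas[measurable]: "(\<lambda>x. cx m x i) \<in> borel_measurable (Pi\<^sub>M {..<m} (\<lambda>_. lborel))"
proof (cases "i < m")
  case True
  then have "(\<lambda>x. cx m x i) = (\<lambda>x. x i)" by (simp add: cx_def)
  then show ?thesis using True by (simp add: measurable_component_singleton)
next
  case False
  then have "(\<lambda>x. cx m x i) = (\<lambda>x. 1 - (\<Sum>j<m. x j))" by (simp add: cx_def)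
  moreover have "(\<lambda>x. 1 - (\<Sum>j<m. x j)) \<in> borel_measurable (Pi\<^sub>M {..<m} (\<lambda>_. lborel))"
    by (intro borel_measurable_diff borel_measurable_const borel_measurable_sum)
       (simp add: measurable_component_singleton)
  ultimately show ?thesis by simp
qed

lemma chart_dom_cx: "x \<in> chart_dom m \<longleftrightarrow> (\<forall>i\<in>{..<m}. 0 < cx m x i) \<and> 0 < cx m x m"
  by (auto simp: chart_dom_def cx_def)

lemma relent_chart1:
  "relent (chart m x) q = (\<Sum>i<Suc m. cx m x i * ln (cx m x i / q ! i))"
  unfolding relent_def by (intro sum.cong) (auto simp: chart_nth)

lemma relent_chart2:
  "length p = Suc m \<Longrightarrow> relent p (chart m x) = (\<Sum>i<Suc m. p ! i * ln (p ! i / cx m x i))"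
  unfolding relent_def by (intro sum.cong) (auto simp: chart_nth)

lemma meas1: "(\<lambda>x. if x \<in> chart_dom m then c * relent (chart m x) q else 0) \<in> borel_measurable (lebesgue_m m)"
proof -
  have "(\<lambda>x. if (\<forall>i\<in>{..<m}. 0 < cx m x i) \<and> 0 < cx m x m then c * (\<Sum>i<Suc m. cx m x i * ln (cx m x i / q ! i)) else 0)
        \<in> borel_measurable (Pi\<^sub>M {..<m} (\<lambda>_. lborel))"
    by measurable
  moreover have "(\<lambda>x. if x \<in> chart_dom m then c * relent (chart m x) q else 0) =
     (\<lambda>x. if (\<forall>i\<in>{..<m}. 0 < cx m x i) \<and> 0 < cx m x m then c * (\<Sum>i<Suc m. cx m x i * ln (cx m x i / q ! i)) else 0)"
    by (rule ext) (simp only: chart_dom_cx relent_chart1)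
  ultimately have "(\<lambda>x. if x \<in> chart_dom m then c * relent (chart m x) q else 0) \<in> borel_measurable (Pi\<^sub>M {..<m} (\<lambda>_. lborel))"
    by simp
  then show ?thesis unfolding lebesgue_m_def by (rule measurable_completion)
qed

lemma meas2:
  assumes "length p = Suc m"
  shows "(\<lambda>x. if x \<in> chart_dom m then c * relent p (chart m x) else 0) \<in> borel_measurable (lebesgue_m m)"
proof -
  have "(\<lambda>x. if (\<forall>i\<in>{..<m}. 0 < cx m x i) \<and> 0 < cx m x m then c * (\<Sum>i<Suc m. p ! i * ln (p ! i / cx m x i)) else 0)
        \<in> borel_measurable (Pi\<^sub>M {..<m} (\<lambda>_. lborel))"
    by measurable
  moreover have "(\<lambda>x. if x \<in> chart_dom m then c * relent p (chart m x) else 0) =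
     (\<lambda>x. if (\<forall>i\<in>{..<m}. 0 < cx m x i) \<and> 0 < cx m x m then c * (\<Sum>i<Suc m. p ! i * ln (p ! i / cx m x i)) else 0)"
    by (rule ext) (simp only: chart_dom_cx relent_chart2[OF assms])
  ultimately have "(\<lambda>x. if x \<in> chart_dom m then c * relent p (chart m x) else 0) \<in> borel_measurable (Pi\<^sub>M {..<m} (\<lambda>_. lborel))"
    by simp
  then show ?thesis unfolding lebesgue_m_def by (rule measurable_completion)
qed

lemma relent_self: "relent p p = 0"
  unfolding relent_def by (intro sum.neutral) auto

lemma chart_osimplex:
  assumes "x \<in> chart_dom m"
  shows "chart m x \<in> osimplex (Suc m)"
proof -
  have pos: "\<forall>i<m. 0 < x i" and s: "(\<Sum>i<m. x i) < 1" using assms by (auto simp: chart_dom_def)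
  have s0: "0 \<le> (\<Sum>i<m. x i)" using pos by (intro sum_nonneg) auto
  have le: "x i \<le> (\<Sum>i<m. x i)" if "i < m" for i
    using that pos by (intro member_le_sum) auto
  have "sum_list (map x [0..<m]) = (\<Sum>i<m. x i)" by (simp add: sum_list_sum_nth atLeast0LessThan)
  then have "sum_list (chart m x) = 1" by (simp add: chart_def)
  moreover have "\<forall>y\<in>set (chart m x). 0 < y \<and> y \<le> 1"
  proof
    fix y assume "y \<in> set (chart m x)"
    then consider i where "i < m" "y = x i" | "y = 1 - (\<Sum>i<m. x i)" by (auto simp: chart_def)
    then show "0 < y \<and> y \<le> 1"
    proof cases
      case 1 then show ?thesis using pos le[OF 1(1)] s by auto
    next
      case 2 then show ?thesis using s s0 by auto
    qed
  qed
  ultimately show ?thesis by (simp add: osimplex_def)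
qed

lemma osimplex_split:
  assumes "a # p \<in> osimplex (Suc (Suc k))"
  shows "0 < a" "a < 1" "[a, 1-a] \<in> osimplex 2" "map ((*) (1/(1-a))) p \<in> osimplex (Suc k)"
proof -
  have lp: "length p = Suc k" and pos: "\<forall>x\<in>set p. 0 < x \<and> x \<le> 1" and a: "0 < a" "a \<le> 1"
    and s: "a + sum_list p = 1" using assms by (auto simp: osimplex_def)
  have "p \<noteq> []" using lp by auto
  then obtain x where "x \<in> set p" by (cases p) auto
  then have "x \<le> sum_list p" "0 < x" using pos by (auto intro!: member_le_sum_list)
  then have "0 < sum_list p" by simp
  then show a1: "a < 1" using s by simp
  show "0 < a" by (rule a(1))
  show "[a, 1-a] \<in> osimplex 2" using a a1 by (simp add: os2)
  have d: "1 - a > 0" using a1 by simp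
  have "sum_list (map ((*) (1/(1-a))) p) = 1" using s d by (simp add: sum_list_const_mult)
  moreover have "\<forall>y\<in>set (map ((*) (1/(1-a))) p). 0 < y \<and> y \<le> 1"
  proof
    fix y assume "y \<in> set (map ((*) (1/(1-a))) p)"
    then obtain x where x: "x \<in> set p" "y = x / (1-a)" by auto
    have "x \<le> sum_list p" using x(1) pos by (intro member_le_sum_list) auto
    then have "x \<le> 1 - a" using s by simp
    then show "0 < y \<and> y \<le> 1" using x pos d by auto
  qed
  ultimately show "map ((*) (1/(1-a))) p \<in> osimplex (Suc k)" using lp by (simp add: osimplex_def)
qed

lemma decomp:
  assumes C3: "C3 I" and C4: "C4 I" and p: "a # p \<in> osimplex (Suc (Suc k))" and q: "b # q \<in> osimplex (Suc (Suc k))"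
  shows "I (a#p) (b#q) = I [a,1-a] [b,1-b] + (1-a) * I (map ((*) (1/(1-a))) p) (map ((*) (1/(1-b))) q)"
proof -
  note pa = osimplex_split[OF p] and qb = osimplex_split[OF q]
  note H = C4_2[OF C4 pa(3) qb(3) os1 os1 pa(4) qb(4)]
  have "map ((*) a) [1] @ map ((*) (1-a)) (map ((*) (1/(1-a))) p) = a # p"
    using pa(2) by (simp add: comp_def)
  moreover have "map ((*) b) [1] @ map ((*) (1-b)) (map ((*) (1/(1-b))) q) = b # q"
    using qb(2) by (simp add: comp_def)
  ultimately show ?thesis using H C3_app[OF C3 os1] by simp
qed

lemma reduce:
  assumes I3: "C3 I" and I4: "C4 I" and J3: "C3 J" and J4: "C4 J"
    and two: "\<And>x y. 0<x \<Longrightarrow> x<1 \<Longrightarrow> 0<y \<Longrightarrow> y<1 \<Longrightarrow> I [x,1-x] [y,1-y] = J [x,1-x] [y,1-y]"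
  shows "p \<in> osimplex (Suc k) \<Longrightarrow> q \<in> osimplex (Suc k) \<Longrightarrow> I p q = J p q"
proof (induction k arbitrary: p q)
  case 0
  have "p = [1]" "q = [1]" using 0 by (auto simp: osimplex_def length_Suc_conv)
  then show ?case using C3_app[OF I3 os1] C3_app[OF J3 os1] by simp
next
  case (Suc k)
  obtain a p' where p: "p = a # p'" using Suc.prems(1) by (cases p) (auto simp: osimplex_def)
  obtain b q' where q: "q = b # q'" using Suc.prems(2) by (cases q) (auto simp: osimplex_def)
  note pa = osimplex_split[OF Suc.prems(1)[unfolded p]] and qb = osimplex_split[OF Suc.prems(2)[unfolded q]]
  have "I p q = I [a,1-a] [b,1-b] + (1-a) * I (map ((*) (1/(1-a))) p') (map ((*) (1/(1-b))) q')"
    unfolding p q by (rule decomp[OF I3 I4]) (use Suc.prems p q in auto)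
  moreover have "J p q = J [a,1-a] [b,1-b] + (1-a) * J (map ((*) (1/(1-a))) p') (map ((*) (1/(1-b))) q')"
    unfolding p q by (rule decomp[OF J3 J4]) (use Suc.prems p q in auto)
  moreover have "I [a,1-a] [b,1-b] = J [a,1-a] [b,1-b]" using two pa(1,2) qb(1,2) by simp
  moreover have "I (map ((*) (1/(1-a))) p') (map ((*) (1/(1-b))) q') = J (map ((*) (1/(1-a))) p') (map ((*) (1/(1-b))) q')"
    using Suc.IH pa(4) qb(4) by simp
  ultimately show ?case by simp
qed

lemma relent_C4_form:
  assumes p: "p \<in> osimplex n" and q: "q \<in> osimplex n" and l: "length \<mu> = n" "length \<nu> = n"
    and k: "\<forall>i<n. \<exists>k\<ge>1. \<mu>!i \<in> osimplex k \<and> \<nu>!i \<in> osimplex k"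
  shows "relent (composite p \<mu>) (composite q \<nu>) = relent p q + (\<Sum>i<n. p!i * relent (\<mu>!i) (\<nu>!i))"
proof -
  have lp: "length p = n" "length q = n" using p q by (auto simp: osimplex_def)
  have "relent (composite p \<mu>) (composite q \<nu>) = relent p q + (\<Sum>i<length p. p!i * relent (\<mu>!i) (\<nu>!i))"
  proof (rule relent_chain)
    show "\<forall>i<length p. length (\<mu>!i) = length (\<nu>!i) \<and> (\<forall>x\<in>set (\<mu>!i). x>0) \<and> (\<forall>x\<in>set (\<nu>!i). x>0) \<and> sum_list (\<mu>!i) = 1"
    proof (intro allI impI)
      fix i assume "i < length p"
      then obtain kk where "\<mu>!i \<in> osimplex kk" "\<nu>!i \<in> osimplex kk" using k lp by auto
      then show "length (\<mu>!i) = length (\<nu>!i) \<and> (\<forall>x\<in>set (\<mu>!i). x>0) \<and> (\<forall>x\<in>set (\<nu>!i). x>0) \<and> sum_list (\<mu>!i) = 1"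
        by (auto simp: osimplex_def)
    qed
  qed (use p q l lp in \<open>auto simp: osimplex_def\<close>)
  then show ?thesis using lp by simp
qed

lemma comp_osimplex:
  assumes p: "p \<in> osimplex n" and q: "q \<in> osimplex n" and l: "length \<mu> = n" "length \<nu> = n"
    and k: "\<forall>i<n. \<exists>k\<ge>1. \<mu>!i \<in> osimplex k \<and> \<nu>!i \<in> osimplex k"
  shows "composite p \<mu> \<in> osimplex (length (composite p \<mu>))" "composite q \<nu> \<in> osimplex (length (composite p \<mu>))"
proof -
  have lp: "length p = n" "length q = n" using p q by (auto simp: osimplex_def)
  have mi: "\<forall>i<n. (\<forall>x\<in>set (\<mu>!i). 0 < x \<and> x \<le> 1) \<and> sum_list (\<mu>!i) = 1"
    and ni: "\<forall>i<n. (\<forall>x\<in>set (\<nu>!i). 0 < x \<and> x \<le> 1) \<and> sum_list (\<nu>!i) = 1"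
    and li: "\<forall>i<n. length (\<mu>!i) = length (\<nu>!i)"
    using k by (auto simp: osimplex_def)
  have cp: "(\<forall>x\<in>set (composite p \<mu>). 0 < x \<and> x \<le> 1) \<and> sum_list (composite p \<mu>) = sum_list p"
    by (rule composite_props) (use l lp p mi in \<open>auto simp: osimplex_def\<close>)
  have cq: "(\<forall>x\<in>set (composite q \<nu>). 0 < x \<and> x \<le> 1) \<and> sum_list (composite q \<nu>) = sum_list q"
    by (rule composite_props) (use l lp q ni in \<open>auto simp: osimplex_def\<close>)
  have "length (composite q \<nu>) = (\<Sum>i<n. length (\<nu>!i))" using length_composite[of \<nu> q] l lp by simp
  also have "\<dots> = (\<Sum>i<n. length (\<mu>!i))" using li by simp
  also have "\<dots> = length (composite p \<mu>)" using length_composite[of \<mu> p] l lp by simp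
  finally have eq: "length (composite q \<nu>) = length (composite p \<mu>)" .
  show "composite p \<mu> \<in> osimplex (length (composite p \<mu>))" using cp p by (simp add: osimplex_def)
  show "composite q \<nu> \<in> osimplex (length (composite p \<mu>))" using cq q eq by (simp add: osimplex_def)
qed

lemma relent_C3: "C3 (\<lambda>p q. c * relent p q)" by (simp add: C3_def relent_self)

lemma relent_C4: "C4 (\<lambda>p q. c * relent p q)"
  unfolding C4_def
proof (intro allI impI)
  fix n p q \<mu> \<nu>
  assume a: "p \<in> osimplex n" "q \<in> osimplex n" "length \<mu> = n" "length \<nu> = n"
    "\<forall>i<n. \<exists>k\<ge>1. \<mu> ! i \<in> osimplex k \<and> \<nu> ! i \<in> osimplex k"
  show "c * relent (composite p \<mu>) (composite q \<nu>) = c * relent p q + (\<Sum>i<n. p ! i * (c * relent (\<mu> ! i) (\<nu> ! i)))"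
    unfolding relent_C4_form[OF a] by (simp add: distrib_left sum_distrib_left algebra_simps)
qed

theorem mainTheorem7:
  fixes I :: "real list \<Rightarrow> real list \<Rightarrow> real"
  shows "(C1 I \<and> C2 I \<and> C3 I \<and> C4 I) \<longleftrightarrow>
    (\<exists>c::real. \<forall>n p q. n \<ge> 1 \<longrightarrow> p \<in> osimplex n \<longrightarrow> q \<in> osimplex n \<longrightarrow>
        I p q = c * relent p q)"
proof
  assume A: "C1 I \<and> C2 I \<and> C3 I \<and> C4 I"
  then have C: "C2 I" "C3 I" "C4 I" and C1: "C1 I" by auto
  obtain ch where mult: "\<forall>a b. a > 0 \<longrightarrow> b > 0 \<longrightarrow> ch (a*b) = ch a + ch b"
    and rep: "\<forall>x y. 0<x \<longrightarrow> x<1 \<longrightarrow> 0<y \<longrightarrow> y<1 \<longrightarrow> bin I x y = x * ch (x/y) + (1-x) * ch ((1-x)/(1-y))"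
    using core[OF C] by blast
  have div: "ch (u/v) = ch u - ch v" if "u > 0" "v > 0" for u v
    using mult[rule_format, of "u/v" v] that by simp
  have binf: "bin I x0 y = x0 * ch x0 + (1-x0) * ch (1-x0) - (x0 * ch y + (1-x0) * ch (1-y))"
    if "0<x0" "x0<1" "0<y" "y<1" for x0 y
  proof -
    have "bin I x0 y = x0 * (ch x0 - ch y) + (1-x0) * (ch (1-x0) - ch (1-y))"
      using rep that div[of x0 y] div[of "1-x0" "1-y"] by simp
    then show ?thesis by (simp add: algebra_simps)
  qed
  have chm: "ch \<in> borel_measurable (lebesgue_on {0<..<1})"
  proof -
    have m1: "(\<lambda>y. I [1/2, 1/2] [y, 1-y]) \<in> borel_measurable (lebesgue_on {0<..<1})"
      by (rule C1_meas[OF C1]) (simp add: os2)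
    have m2: "(\<lambda>y. I [1/3, 2/3] [y, 1-y]) \<in> borel_measurable (lebesgue_on {0<..<1})"
      by (rule C1_meas[OF C1]) (simp add: os2)
    define K where "K = 4 * ch (1/2) - 3 * ((1/3) * ch (1/3) + (2/3) * ch (2/3))"
    have m: "(\<lambda>y. K - 4 * I [1/2, 1/2] [y, 1-y] + 3 * I [1/3, 2/3] [y, 1-y]) \<in> borel_measurable (lebesgue_on {0<..<1})"
      using m1 m2 by measurable
    have eq: "K - 4 * I [1/2, 1/2] [y, 1-y] + 3 * I [1/3, 2/3] [y, 1-y] = ch y"
      if "y \<in> space (lebesgue_on {0<..<1})" for y
    proof -
      have y: "0 < y" "y < 1" using that by auto
      have b1: "I [1/2, 1/2] [y, 1-y] = bin I (1/2) y" by (simp add: bin_def)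
      have b2: "I [1/3, 2/3] [y, 1-y] = bin I (1/3) y" by (simp add: bin_def)
      have e1: "bin I (1/2) y = 1/2 * ch (1/2) + (1/2) * ch (1/2) - (1/2 * ch y + (1/2) * ch (1-y))"
        using binf[of "1/2" y] y by simp
      have e2: "bin I (1/3) y = 1/3 * ch (1/3) + (2/3) * ch (2/3) - (1/3 * ch y + (2/3) * ch (1-y))"
        using binf[of "1/3" y] y by simp
      show ?thesis unfolding b1 b2 e1 e2 K_def by simp
    qed
    show ?thesis by (rule measurable_cong[THEN iffD1, OF eq m])
  qed
  obtain c where c: "\<forall>r>0. ch r = c * ln r"
    using mult_cauchy_measurable[of ch] mult chm by blast
  have two: "I [x,1-x] [y,1-y] = c * relent [x,1-x] [y,1-y]" if "0<x" "x<1" "0<y" "y<1" for x y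
  proof -
    have "I [x,1-x] [y,1-y] = x * ch (x/y) + (1-x) * ch ((1-x)/(1-y))"
      using rep that by (simp add: bin_def)
    also have "\<dots> = c * relent [x,1-x] [y,1-y]"
      using c that by (simp add: relent2 algebra_simps)
    finally show ?thesis .
  qed
  show "\<exists>c::real. \<forall>n p q. n \<ge> 1 \<longrightarrow> p \<in> osimplex n \<longrightarrow> q \<in> osimplex n \<longrightarrow> I p q = c * relent p q"
  proof (intro exI[of _ c] allI impI)
    fix n p q assume n: "n \<ge> 1" and pq: "p \<in> osimplex n" "q \<in> osimplex n"
    then obtain k where k: "n = Suc k" by (cases n) auto
    show "I p q = c * relent p q"
      by (rule reduce[OF C(2) C(3) relent_C3 relent_C4, where k=k]) (use two pq k in auto)
  qed
next
  assume "\<exists>c::real. \<forall>n p q. n \<ge> 1 \<longrightarrow> p \<in> osimplex n \<longrightarrow> q \<in> osimplex n \<longrightarrow> I p q = c * relent p q"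
  then obtain c where H: "\<forall>n p q. n \<ge> 1 \<longrightarrow> p \<in> osimplex n \<longrightarrow> q \<in> osimplex n \<longrightarrow> I p q = c * relent p q" by blast
  have Hs: "I p q = c * relent p q" if "p \<in> osimplex n" "q \<in> osimplex n" for n p q
    using H osimplex_pos[OF that(1)] that by blast
  have C1: "C1 I"
    unfolding C1_def simplex_measurable_def
  proof (intro allI conjI ballI)
    fix m q assume q: "q \<in> osimplex (Suc m)"
    have "(\<lambda>x. if x \<in> chart_dom m then I (chart m x) q else 0) = (\<lambda>x. if x \<in> chart_dom m then c * relent (chart m x) q else 0)"
      using Hs[OF chart_osimplex q] by (intro ext) simp
    then show "(\<lambda>x. if x \<in> chart_dom m then I (chart m x) q else 0) \<in> borel_measurable (lebesgue_m m)"
      using meas1 by simp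
  next
    fix m p assume p: "p \<in> osimplex (Suc m)"
    have "(\<lambda>x. if x \<in> chart_dom m then I p (chart m x) else 0) = (\<lambda>x. if x \<in> chart_dom m then c * relent p (chart m x) else 0)"
      using Hs[OF p chart_osimplex] by (intro ext) simp
    moreover have "length p = Suc m" using p by (simp add: osimplex_def)
    ultimately show "(\<lambda>x. if x \<in> chart_dom m then I p (chart m x) else 0) \<in> borel_measurable (lebesgue_m m)"
      using meas2 by simp
  qed
  have C2: "C2 I"
    unfolding C2_def
  proof (intro allI impI)
    fix n p q \<sigma> assume a: "p \<in> osimplex n" "q \<in> osimplex n" "\<sigma> permutes {..<n}"
    have l: "length p = n" "length q = n" using a by (auto simp: osimplex_def)
    show "I (permute_vec p \<sigma>) (permute_vec q \<sigma>) = I p q"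
      using Hs[OF permute_osimplex[OF a(1,3)] permute_osimplex[OF a(2,3)]] Hs[OF a(1,2)] relent_perm[OF l a(3)]
      by simp
  qed
  have C3: "C3 I" unfolding C3_def using Hs relent_self by simp
  have C4: "C4 I"
    unfolding C4_def
  proof (intro allI impI)
    fix n p q \<mu> \<nu>
    assume a: "p \<in> osimplex n" "q \<in> osimplex n" "length \<mu> = n" "length \<nu> = n"
      "\<forall>i<n. \<exists>k\<ge>1. \<mu> ! i \<in> osimplex k \<and> \<nu> ! i \<in> osimplex k"
    have "I (composite p \<mu>) (composite q \<nu>) = c * relent (composite p \<mu>) (composite q \<nu>)"
      by (rule Hs[OF comp_osimplex[OF a]])
    also have "\<dots> = c * relent p q + (\<Sum>i<n. p ! i * (c * relent (\<mu> ! i) (\<nu> ! i)))"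
      unfolding relent_C4_form[OF a] by (simp add: distrib_left sum_distrib_left algebra_simps)
    also have "\<dots> = I p q + (\<Sum>i<n. p ! i * I (\<mu> ! i) (\<nu> ! i))"
    proof -
      have "I (\<mu> ! i) (\<nu> ! i) = c * relent (\<mu> ! i) (\<nu> ! i)" if "i < n" for i
        using a(5) that Hs by blast
      then show ?thesis using Hs[OF a(1,2)] by simp
    qed
    finally show "I (composite p \<mu>) (composite q \<nu>) = I p q + (\<Sum>i<n. p ! i * I (\<mu> ! i) (\<nu> ! i))" .
  qed
  show "C1 I \<and> C2 I \<and> C3 I \<and> C4 I" using C1 C2 C3 C4 by blast
qed

end
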